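(* In $\mathfrak{h}^0_t[[u,v]]$ one has $$\Delta_v^t\left(\frac{1}{1-xu-xv+x[(1-t)x+y]uv}\,\frac{x}{1-txv}\,y\right)=\frac{x}{1-xu}\,\frac{y}{1-yv}.$$
   Context: $t,u,v$ are variables commuting with each other and with $x,y$. $\mathfrak{h}_t=\mathbb{Q}[t]\langle x,y\rangle$, $\mathfrak{h}^0_t=\mathbb{Q}[t]+x\mathfrak{h}_ty$; $1/(1-X)$ denotes the (concatenation) geometric series $\sum_{n\ge0}X^n$ in the completed noncommutative power series ring. $\sigma_t$ is the algebra automorphism of $\mathfrak{h}_t$ with $\sigma_t(x)=x,\sigma_t(y)=tx+y$; $S_t$ is the $\mathbb{Q}[t]$-linear map with $S_t(1)=1$, $S_t(wa)=\sigma_t(w)a$ for words $w$, letters $a$; $S_{-t}$ is the same with $-t$ (the inverse of $S_t$). For $n\ge1$, $\partial_n$ is the $\mathbb{Q}[t]$-linear derivation of $\mathfrak{h}_t$ with $\partial_n(x)=x(x+y)^{n-1}y$, $\partial_n(y)=-x(x+y)^{n-1}y$, and $\partial_n^t=S_{-t}\circ\partial_n\circ S_t$. Define $\Delta_v^t=\exp\big(\sum_{n\ge1}\frac{\partial_n^t}{n}v^n\big)$, acting coefficientwise on power series in $u,v$. *)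

theory Defs
  imports "HOL-Computational_Algebra.Polynomial"
begin

datatype letter = X | Y

type_synonym word = "letter list"
(* an element of h_t (or of its completion): coefficient of each word, in Q[t] *)
type_synonym ncp = "word \<Rightarrow> rat poly"
(* a power series in the commuting variables u, v with coefficients in h_t:
   S i j is the coefficient of u^i v^j *)
type_synonym ser = "nat \<Rightarrow> nat \<Rightarrow> ncp"

definition tvar :: "rat poly" where "tvar = [:0, 1:]"

definition nczero :: ncp where "nczero = (\<lambda>w. 0)"
definition ncmon :: "word \<Rightarrow> ncp" where "ncmon w = (\<lambda>v. if v = w then 1 else 0)"
definition ncone :: ncp where "ncone = ncmon []"
definition ncx :: ncp where "ncx = ncmon [X]"
definition ncy :: ncp where "ncy = ncmon [Y]"
definition ncadd :: "ncp \<Rightarrow> ncp \<Rightarrow> ncp" where "ncadd f g = (\<lambda>w. f w + g w)"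
definition ncsub :: "ncp \<Rightarrow> ncp \<Rightarrow> ncp" where "ncsub f g = (\<lambda>w. f w - g w)"
definition ncneg :: "ncp \<Rightarrow> ncp" where "ncneg f = (\<lambda>w. - f w)"
definition ncsmult :: "rat poly \<Rightarrow> ncp \<Rightarrow> ncp" where "ncsmult c f = (\<lambda>w. c * f w)"

definition ncmult :: "ncp \<Rightarrow> ncp \<Rightarrow> ncp" where
  "ncmult f g = (\<lambda>w. \<Sum>k\<le>length w. f (take k w) * g (drop k w))"

fun ncpow :: "ncp \<Rightarrow> nat \<Rightarrow> ncp" where
  "ncpow f 0 = ncone"
| "ncpow f (Suc n) = ncmult f (ncpow f n)"

(* All maps used here
   (sigma_t, S_t, partial_n) send a word to a combination of words that are
   at least as long, so only words v with length v <= length w contribute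
   to the coefficient of w; the sum is therefore finite and exact. *)
definition nclin :: "(word \<Rightarrow> ncp) \<Rightarrow> ncp \<Rightarrow> ncp" where
  "nclin F f = (\<lambda>w. \<Sum>v\<in>{v. length v \<le> length w}. f v * F v w)"

section \<open>sigma_t and S_t (parametrised by c = t or c = -t)\<close>

fun sigma_letter :: "rat poly \<Rightarrow> letter \<Rightarrow> ncp" where
  "sigma_letter c X = ncx"
| "sigma_letter c Y = ncadd (ncsmult c ncx) ncy"

fun sigma_word :: "rat poly \<Rightarrow> word \<Rightarrow> ncp" where
  "sigma_word c [] = ncone"
| "sigma_word c (a # w) = ncmult (sigma_letter c a) (sigma_word c w)"

definition S_word :: "rat poly \<Rightarrow> word \<Rightarrow> ncp" where
  "S_word c w = (if w = [] then ncone
                 else ncmult (sigma_word c (butlast w)) (ncmon [last w]))"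

definition Sop :: "rat poly \<Rightarrow> ncp \<Rightarrow> ncp" where
  "Sop c = nclin (S_word c)"

definition dletter :: "nat \<Rightarrow> letter \<Rightarrow> ncp" where
  "dletter n a = (let p = ncmult ncx (ncmult (ncpow (ncadd ncx ncy) (n - 1)) ncy)
                  in (case a of X \<Rightarrow> p | Y \<Rightarrow> ncneg p))"

definition dword :: "nat \<Rightarrow> word \<Rightarrow> ncp" where
  "dword n w = (\<lambda>v. \<Sum>i<length w.
      ncmult (ncmon (take i w)) (ncmult (dletter n (w ! i)) (ncmon (drop (Suc i) w))) v)"

definition dop :: "nat \<Rightarrow> ncp \<Rightarrow> ncp" where
  "dop n = nclin (dword n)"

definition dtop :: "nat \<Rightarrow> ncp \<Rightarrow> ncp" where
  "dtop n f = Sop (- tvar) (dop n (Sop tvar f))"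

(* f * u^a * v^b *)
definition sterm :: "nat \<Rightarrow> nat \<Rightarrow> ncp \<Rightarrow> ser" where
  "sterm a b f = (\<lambda>i j. if i = a \<and> j = b then f else nczero)"

definition sadd :: "ser \<Rightarrow> ser \<Rightarrow> ser" where
  "sadd F G = (\<lambda>i j. ncadd (F i j) (G i j))"

definition ssub :: "ser \<Rightarrow> ser \<Rightarrow> ser" where
  "ssub F G = (\<lambda>i j. ncsub (F i j) (G i j))"

definition smul :: "ser \<Rightarrow> ser \<Rightarrow> ser" where
  "smul F G = (\<lambda>i j w. \<Sum>i1\<le>i. \<Sum>j1\<le>j. ncmult (F i1 j1) (G (i - i1) (j - j1)) w)"

fun spow :: "ser \<Rightarrow> nat \<Rightarrow> ser" where
  "spow F 0 = sterm 0 0 ncone"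
| "spow F (Suc n) = smul F (spow F n)"

(* 1/(1-F) = sum_n F^n, for F with vanishing constant (u^0 v^0) term;
   then F^n only contributes to u^i v^j with n <= i + j *)
definition sgeom :: "ser \<Rightarrow> ser" where
  "sgeom F = (\<lambda>i j w. \<Sum>n\<le>i + j. spow F n i j w)"

definition Dv :: "ser \<Rightarrow> ser" where
  "Dv F = (\<lambda>i j w. \<Sum>n\<in>{1..j}. smult (1 / of_nat n) (dtop n (F i (j - n)) w))"

(* exp(D); D raises the v-degree by at least 1, so D^k contributes to v^j only for k <= j *)
definition Delta :: "ser \<Rightarrow> ser" where
  "Delta F = (\<lambda>i j w. \<Sum>k\<le>j. smult (1 / fact k) ((Dv ^^ k) F i j w))"

end

theory Submission
  imports Defs "HOL-Computational_Algebra.Formal_Power_Series"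
begin

lemma ncmult_assoc: "ncmult (ncmult f g) h = ncmult f (ncmult g h)"
proof
  fix w :: word
  define n where "n = length w"
  define \<Phi> where "\<Phi> l m = f (take l w) * g (take m (drop l w)) * h (drop (l + m) w)" for l m
  have "ncmult (ncmult f g) h w = (\<Sum>k\<le>n. \<Sum>l\<le>k. \<Phi> l (k - l))"
    unfolding ncmult_def n_def \<Phi>_def
    by (intro sum.cong refl) (auto simp: sum_distrib_right drop_take min_def)
  also have "\<dots> = (\<Sum>(l,m)\<in>{(l,m). l + m \<le> n}. \<Phi> l m)"
    by (rule sum.triangle_reindex_eq[symmetric])
  also have "\<dots> = (\<Sum>l\<le>n. \<Sum>m\<le>n - l. \<Phi> l m)"
  proof -
    have "{(l,m). l + m \<le> n} = Sigma {..n} (\<lambda>l. {..n - l})" by auto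
    then show ?thesis by (simp add: sum.Sigma)
  qed
  also have "\<dots> = ncmult f (ncmult g h) w"
    unfolding ncmult_def n_def \<Phi>_def
    by (intro sum.cong refl) (auto simp: sum_distrib_left mult.assoc add.commute)
  finally show "ncmult (ncmult f g) h w = ncmult f (ncmult g h) w" .
qed

lemma ncmult_one_left: "ncmult ncone f = f"
proof
  fix w :: word
  have "ncmult ncone f w = (\<Sum>k\<le>length w. if k = 0 then f w else 0)"
    unfolding ncmult_def ncone_def ncmon_def
    by (intro sum.cong refl) auto
  then show "ncmult ncone f w = f w" by simp
qed

lemma ncmult_one_right: "ncmult f ncone = f"
proof
  fix w :: word
  have "ncmult f ncone w = (\<Sum>k\<le>length w. if k = length w then f w else 0)"
    unfolding ncmult_def ncone_def ncmon_def
    by (intro sum.cong refl) auto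
  then show "ncmult f ncone w = f w" by simp
qed

lemma ncmult_add_left: "ncmult (ncadd f g) h = ncadd (ncmult f h) (ncmult g h)"
  by (auto simp: ncmult_def ncadd_def fun_eq_iff sum.distrib algebra_simps)
lemma ncmult_add_right: "ncmult h (ncadd f g) = ncadd (ncmult h f) (ncmult h g)"
  by (auto simp: ncmult_def ncadd_def fun_eq_iff sum.distrib algebra_simps)
lemma ncmult_zero_left: "ncmult nczero h = nczero"
  by (auto simp: ncmult_def nczero_def fun_eq_iff)
lemma ncmult_zero_right: "ncmult h nczero = nczero"
  by (auto simp: ncmult_def nczero_def fun_eq_iff)

typedef nc = "UNIV :: ncp set" by simp

setup_lifting type_definition_nc

instantiation nc :: ring_1
begin
lift_definition zero_nc :: nc is nczero .
lift_definition one_nc :: nc is ncone .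
lift_definition plus_nc :: "nc \<Rightarrow> nc \<Rightarrow> nc" is ncadd .
lift_definition minus_nc :: "nc \<Rightarrow> nc \<Rightarrow> nc" is ncsub .
lift_definition uminus_nc :: "nc \<Rightarrow> nc" is ncneg .
lift_definition times_nc :: "nc \<Rightarrow> nc \<Rightarrow> nc" is ncmult .
instance
proof
  fix a b c :: nc
  show "a * b * c = a * (b * c)" by transfer (rule ncmult_assoc)
  show "1 * a = a" by transfer (rule ncmult_one_left)
  show "a * 1 = a" by transfer (rule ncmult_one_right)
  show "(a + b) * c = a * c + b * c" by transfer (rule ncmult_add_left)
  show "a * (b + c) = a * b + a * c" by transfer (rule ncmult_add_right)
  show "a + b + c = a + (b + c)" by transfer (auto simp: ncadd_def)
  show "a + b = b + a" by transfer (auto simp: ncadd_def)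
  show "0 + a = a" by transfer (auto simp: ncadd_def nczero_def)
  show "- a + a = 0" by transfer (auto simp: ncadd_def nczero_def ncneg_def)
  show "a - b = a + - b" by transfer (auto simp: ncadd_def ncsub_def ncneg_def)
  show "(0::nc) \<noteq> 1" by transfer (auto simp: nczero_def ncone_def ncmon_def fun_eq_iff)
qed
end

lemma Rep_nc_add: "Rep_nc (a + b) w = Rep_nc a w + Rep_nc b w"
  by transfer (simp add: ncadd_def)
lemma Rep_nc_diff: "Rep_nc (a - b) w = Rep_nc a w - Rep_nc b w"
  by transfer (simp add: ncsub_def)
lemma Rep_nc_uminus: "Rep_nc (- a) w = - Rep_nc a w"
  by transfer (simp add: ncneg_def)
lemma Rep_nc_zero: "Rep_nc 0 w = 0"
  by transfer (simp add: nczero_def)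
lemma Rep_nc_sum: "Rep_nc (sum f A) w = (\<Sum>a\<in>A. Rep_nc (f a) w)"
  by (induction A rule: infinite_finite_induct) (auto simp: Rep_nc_add Rep_nc_zero)
lemma Rep_nc_mult: "Rep_nc (a * b) = ncmult (Rep_nc a) (Rep_nc b)"
  by transfer simp


lemma Rep_Abs_nc[simp]: "Rep_nc (Abs_nc f) = f"
  by (simp add: Abs_nc_inverse)
declare Rep_nc_inverse[simp]

lemma UNIV_letter: "(UNIV :: letter set) = {X, Y}"
  using letter.exhaust by auto

instance letter :: finite
  by standard (simp add: UNIV_letter)

definition W :: "nat \<Rightarrow> word set" where "W n = {v. length v \<le> n}"

lemma finite_W[simp]: "finite (W n)"
proof -
  have "W n = {xs. set xs \<subseteq> UNIV \<and> length xs \<le> n}" by (auto simp: W_def)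
  moreover have "finite (UNIV :: letter set)" by (simp add: UNIV_letter)
  ultimately show ?thesis using finite_lists_length_le[of "UNIV :: letter set" n] by simp
qed

lemma mem_W[simp]: "v \<in> W n \<longleftrightarrow> length v \<le> n" by (simp add: W_def)

definition lnd :: "(word \<Rightarrow> ncp) \<Rightarrow> bool" where
  "lnd F \<longleftrightarrow> (\<forall>v w. length w < length v \<longrightarrow> F v w = 0)"

lemma nclin_ext:
  assumes "lnd F" "length w \<le> N"
  shows "nclin F f w = (\<Sum>v\<in>W N. f v * F v w)"
  unfolding nclin_def
proof (rule sum.mono_neutral_left)
  show "finite (W N)" by simp
  show "{v. length v \<le> length w} \<subseteq> W N" using assms(2) by auto
  show "\<forall>i\<in>W N - {v. length v \<le> length w}. f i * F i w = 0"
    using assms(1) by (auto simp: lnd_def)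
qed

lemma nclin_K:
  assumes "lnd F"
  shows "nclin F (ncmult f g) w =
     (\<Sum>a\<in>W (length w). \<Sum>b\<in>W (length w). f a * g b * F (a @ b) w)"
proof -
  define n where "n = length w"
  have "nclin F (ncmult f g) w = (\<Sum>v\<in>W n. \<Sum>k\<le>length v. f (take k v) * g (drop k v) * F v w)"
    unfolding nclin_def ncmult_def n_def W_def by (simp add: sum_distrib_right)
  also have "\<dots> = (\<Sum>(v,k)\<in>Sigma (W n) (\<lambda>v. {..length v}). f (take k v) * g (drop k v) * F v w)"
    by (rule sum.Sigma) auto
  also have "\<dots> = (\<Sum>(a,b)\<in>{(a,b). length a + length b \<le> n}. f a * g b * F (a @ b) w)"
    by (rule sum.reindex_bij_witness[where i="\<lambda>(a,b). (a @ b, length a)" and j="\<lambda>(v,k). (take k v, drop k v)"])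
       (auto simp: min_def)
  also have "\<dots> = (\<Sum>(a,b)\<in>W n \<times> W n. f a * g b * F (a @ b) w)"
  proof (rule sum.mono_neutral_left)
    show "finite (W n \<times> W n)" by simp
    show "{(a, b). length a + length b \<le> n} \<subseteq> W n \<times> W n" by auto
    show "\<forall>i\<in>W n \<times> W n - {(a, b). length a + length b \<le> n}. (case i of (a, b) \<Rightarrow> f a * g b * F (a @ b) w) = 0"
    proof -
      have "\<And>a b. length w < length a + length b \<Longrightarrow> F (a @ b) w = 0"
        using assms by (simp add: lnd_def)
      then show ?thesis by (auto simp: n_def) (meson not_le)
    qed
  qed
  also have "\<dots> = (\<Sum>a\<in>W n. \<Sum>b\<in>W n. f a * g b * F (a @ b) w)"
    by (simp add: sum.cartesian_product)
  finally show ?thesis by (simp add: n_def)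
qed

lemma nclin_K2:
  assumes "lnd F1" "lnd F2"
  shows "ncmult (nclin F1 f) (nclin F2 g) w =
     (\<Sum>a\<in>W (length w). \<Sum>b\<in>W (length w). f a * g b * ncmult (F1 a) (F2 b) w)"
proof -
  define n where "n = length w"
  have "ncmult (nclin F1 f) (nclin F2 g) w =
     (\<Sum>k\<le>n. (\<Sum>a\<in>W n. f a * F1 a (take k w)) * (\<Sum>b\<in>W n. g b * F2 b (drop k w)))"
    unfolding ncmult_def n_def
    by (intro sum.cong refl; subst nclin_ext[OF assms(1)]; (subst nclin_ext[OF assms(2)])?) auto
  also have "\<dots> = (\<Sum>k\<le>n. \<Sum>a\<in>W n. \<Sum>b\<in>W n. f a * g b * (F1 a (take k w) * F2 b (drop k w)))"
    by (simp add: sum_product algebra_simps)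
  also have "\<dots> = (\<Sum>a\<in>W n. \<Sum>b\<in>W n. \<Sum>k\<le>n. f a * g b * (F1 a (take k w) * F2 b (drop k w)))"
    by (subst sum.swap) (simp add: sum.swap[of _ "W n" "{..n}"])
  also have "\<dots> = (\<Sum>a\<in>W n. \<Sum>b\<in>W n. f a * g b * ncmult (F1 a) (F2 b) w)"
    by (simp add: ncmult_def n_def sum_distrib_left)
  finally show ?thesis by (simp add: n_def)
qed

lemma nclin_KK:
  assumes "lnd F" "lnd F1" "lnd F2" "lnd F3" "lnd F4"
    and "\<And>a b. g b \<noteq> 0 \<Longrightarrow> F (a @ b) = ncadd (ncmult (F1 a) (F2 b)) (ncmult (F3 a) (F4 b))"
  shows "nclin F (ncmult f g) = ncadd (ncmult (nclin F1 f) (nclin F2 g)) (ncmult (nclin F3 f) (nclin F4 g))"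
proof
  fix w
  show "nclin F (ncmult f g) w = ncadd (ncmult (nclin F1 f) (nclin F2 g)) (ncmult (nclin F3 f) (nclin F4 g)) w"
    unfolding ncadd_def nclin_K[OF assms(1)] nclin_K2[OF assms(2,3)] nclin_K2[OF assms(4,5)]
    unfolding sum.distrib[symmetric]
    apply (intro sum.cong refl)
    subgoal for a b using assms(6)[of b a] by (cases "g b = 0") (auto simp: ncadd_def algebra_simps)
    done
qed


lemma nclin_add: "nclin F (ncadd f g) = ncadd (nclin F f) (nclin F g)"
  by (auto simp: nclin_def ncadd_def fun_eq_iff sum.distrib algebra_simps)
lemma nclin_smult: "nclin F (ncsmult c f) = ncsmult c (nclin F f)"
  by (auto simp: nclin_def ncsmult_def fun_eq_iff sum_distrib_left algebra_simps)
lemma nclin_neg: "nclin F (ncneg f) = ncneg (nclin F f)"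
  by (auto simp: nclin_def ncneg_def fun_eq_iff sum_negf)
lemma nclin_zero: "nclin F nczero = nczero"
  by (auto simp: nclin_def nczero_def fun_eq_iff)
lemma nclin_Fadd: "nclin (\<lambda>v. ncadd (F v) (G v)) f = ncadd (nclin F f) (nclin G f)"
  by (auto simp: nclin_def ncadd_def fun_eq_iff sum.distrib algebra_simps)
lemma nclin_Fzero: "nclin (\<lambda>v. nczero) f = nczero"
  by (auto simp: nclin_def nczero_def fun_eq_iff)

lemma nclin_mon:
  assumes "lnd F" shows "nclin F (ncmon u) = F u"
proof
  fix w
  have "nclin F (ncmon u) w = (\<Sum>v\<in>{v. length v \<le> length w}. if v = u then F u w else 0)"
    unfolding nclin_def ncmon_def by (intro sum.cong refl) auto
  also have "\<dots> = (if length u \<le> length w then F u w else 0)"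
    by (simp add: sum.delta'[of "{v. length v \<le> length w}", simplified] W_def[symmetric])
  also have "\<dots> = F u w" using assms by (auto simp: lnd_def)
  finally show "nclin F (ncmon u) w = F u w" .
qed

lemma lnd_ncmon: "lnd ncmon"
  by (auto simp: lnd_def ncmon_def)

lemma nclin_id: "nclin ncmon f = f"
proof
  fix w
  have "nclin ncmon f w = (\<Sum>v\<in>{v. length v \<le> length w}. if v = w then f w else 0)"
    unfolding nclin_def ncmon_def by (intro sum.cong refl) auto
  also have "\<dots> = (\<Sum>v\<in>W (length w). if v = w then f w else 0)"
    by (simp add: W_def)
  also have "\<dots> = f w"
    by (simp add: sum.delta)
  finally show "nclin ncmon f w = f w" .
qed

lemma lnd_comp:
  assumes "lnd F" "lnd G" shows "lnd (\<lambda>v. nclin F (G v))"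
  unfolding lnd_def
proof (intro allI impI)
  fix v0 w0 :: word assume lt: "length w0 < length v0"
  show "nclin F (G v0) w0 = 0"
    unfolding nclin_def using assms(2) lt by (intro sum.neutral) (auto simp: lnd_def)
qed

lemma nclin_comp:
  assumes "lnd F" "lnd G"
  shows "nclin F (nclin G f) = nclin (\<lambda>v. nclin F (G v)) f"
proof
  fix w :: word
  define n where "n = length w"
  have "nclin F (nclin G f) w = (\<Sum>u\<in>W n. (\<Sum>v\<in>W n. f v * G v u) * F u w)"
    unfolding nclin_def[of F] n_def W_def[symmetric]
    by (intro sum.cong refl, subst nclin_ext[OF assms(2)]) auto
  also have "\<dots> = (\<Sum>u\<in>W n. \<Sum>v\<in>W n. f v * G v u * F u w)"
    by (simp add: sum_distrib_right)
  also have "\<dots> = (\<Sum>v\<in>W n. \<Sum>u\<in>W n. f v * G v u * F u w)"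
    by (rule sum.swap)
  also have "\<dots> = (\<Sum>v\<in>W n. f v * (\<Sum>u\<in>W n. G v u * F u w))"
    by (simp add: sum_distrib_left mult.assoc)
  also have "\<dots> = nclin (\<lambda>v. nclin F (G v)) f w"
    unfolding nclin_def[of "\<lambda>v. nclin F (G v)"] n_def W_def[symmetric]
    by (intro sum.cong refl, subst nclin_ext[OF assms(1)]) auto
  finally show "nclin F (nclin G f) w = nclin (\<lambda>v. nclin F (G v)) f w" .
qed

definition mon :: "word \<Rightarrow> nc" where "mon v = Abs_nc (ncmon v)"
definition sc :: "rat poly \<Rightarrow> nc" where "sc c = Abs_nc (ncsmult c ncone)"
definition NL :: "(word \<Rightarrow> nc) \<Rightarrow> nc \<Rightarrow> nc" where
  "NL F a = Abs_nc (nclin (\<lambda>v. Rep_nc (F v)) (Rep_nc a))"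
definition lndn :: "(word \<Rightarrow> nc) \<Rightarrow> bool" where "lndn F = lnd (\<lambda>v. Rep_nc (F v))"
definition sge :: "nat \<Rightarrow> nc \<Rightarrow> bool" where "sge d a \<longleftrightarrow> (\<forall>w. length w < d \<longrightarrow> Rep_nc a w = 0)"

lemma plus_nc_Rep: "a + b = Abs_nc (ncadd (Rep_nc a) (Rep_nc b))" by transfer simp
lemma times_nc_Rep: "a * b = Abs_nc (ncmult (Rep_nc a) (Rep_nc b))" by transfer simp
lemma uminus_nc_Rep: "- a = Abs_nc (ncneg (Rep_nc a))" by transfer simp
lemma zero_nc_Rep: "0 = Abs_nc nczero" by transfer simp
lemma one_nc_Rep: "1 = Abs_nc ncone" by transfer simp

lemma Rep_nc_eqI: "(\<And>w. Rep_nc a w = Rep_nc b w) \<Longrightarrow> a = b"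
  by (metis Rep_nc_inject ext)

lemma NL_add: "NL F (a + b) = NL F a + NL F b"
  by (simp add: NL_def plus_nc_Rep nclin_add)
lemma NL_zero: "NL F 0 = 0"
  by (simp add: NL_def zero_nc_Rep nclin_zero)
lemma NL_uminus: "NL F (- a) = - NL F a"
  by (simp add: NL_def uminus_nc_Rep nclin_neg)
lemma NL_diff: "NL F (a - b) = NL F a - NL F b"
  by (metis NL_add NL_uminus diff_conv_add_uminus)
lemma NL_sum: "NL F (sum g A) = (\<Sum>i\<in>A. NL F (g i))"
  by (induction A rule: infinite_finite_induct) (auto simp: NL_zero NL_add)
lemma NL_Fadd: "NL (\<lambda>v. F v + G v) a = NL F a + NL G a"
  by (simp add: NL_def plus_nc_Rep nclin_Fadd)
lemma NL_Fzero: "NL (\<lambda>v. 0) a = 0"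
  by (simp add: NL_def zero_nc_Rep nclin_Fzero)
lemma NL_mon: "lndn F \<Longrightarrow> NL F (mon u) = F u"
  by (simp add: NL_def mon_def lndn_def nclin_mon)
lemma NL_id: "NL mon a = a"
  by (simp add: NL_def mon_def nclin_id)
lemma lndn_mon: "lndn mon"
  by (simp add: lndn_def mon_def lnd_ncmon)
lemma lndn_comp: "lndn F \<Longrightarrow> lndn G \<Longrightarrow> lndn (\<lambda>v. NL F (G v))"
  unfolding lndn_def NL_def by (simp add: lnd_comp)
lemma NL_comp: "lndn F \<Longrightarrow> lndn G \<Longrightarrow> NL F (NL G a) = NL (\<lambda>v. NL F (G v)) a"
  unfolding lndn_def NL_def by (simp add: nclin_comp)

lemma NL_KK:
  assumes "lndn F" "lndn F1" "lndn F2" "lndn F3" "lndn F4"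
    and "\<And>a b. Rep_nc q b \<noteq> 0 \<Longrightarrow> F (a @ b) = F1 a * F2 b + F3 a * F4 b"
  shows "NL F (p * q) = NL F1 p * NL F2 q + NL F3 p * NL F4 q"
proof -
  have "nclin (\<lambda>v. Rep_nc (F v)) (ncmult (Rep_nc p) (Rep_nc q)) =
     ncadd (ncmult (nclin (\<lambda>v. Rep_nc (F1 v)) (Rep_nc p)) (nclin (\<lambda>v. Rep_nc (F2 v)) (Rep_nc q)))
           (ncmult (nclin (\<lambda>v. Rep_nc (F3 v)) (Rep_nc p)) (nclin (\<lambda>v. Rep_nc (F4 v)) (Rep_nc q)))"
    by (rule nclin_KK) (use assms in \<open>auto simp: lndn_def plus_nc_Rep times_nc_Rep\<close>)
  then show ?thesis by (simp add: NL_def plus_nc_Rep times_nc_Rep)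
qed

lemma lndn_sge: "(\<And>v. sge (length v) (F v)) \<Longrightarrow> lndn F"
  by (auto simp: lndn_def lnd_def sge_def)

lemma sge_mult: "sge d1 a \<Longrightarrow> sge d2 b \<Longrightarrow> sge (d1 + d2) (a * b)"
  unfolding sge_def Rep_nc_mult ncmult_def
proof (intro allI impI sum.neutral ballI)
  fix w :: word and k assume a: "\<forall>w. length w < d1 \<longrightarrow> Rep_nc a w = 0"
    and b: "\<forall>w. length w < d2 \<longrightarrow> Rep_nc b w = 0"
    and w: "length w < d1 + d2" and k: "k \<in> {..length w}"
  show "Rep_nc a (take k w) * Rep_nc b (drop k w) = 0"
  proof (cases "k < d1")
    case True then show ?thesis using a by simp
  next
    case False then show ?thesis using b w k by simp
  qed
qed

lemma sge_add: "sge d a \<Longrightarrow> sge d b \<Longrightarrow> sge d (a + b)"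
  by (auto simp: sge_def Rep_nc_add)
lemma sge_uminus: "sge d a \<Longrightarrow> sge d (- a)"
  by (auto simp: sge_def Rep_nc_uminus)
lemma sge_zero: "sge d 0"
  by (auto simp: sge_def Rep_nc_zero)
lemma sge_sum: "(\<And>i. i \<in> A \<Longrightarrow> sge d (f i)) \<Longrightarrow> sge d (sum f A)"
  by (induction A rule: infinite_finite_induct) (auto simp: sge_zero sge_add)
lemma sge_mono: "sge d a \<Longrightarrow> d' \<le> d \<Longrightarrow> sge d' a"
  by (auto simp: sge_def)
lemma sge_mon: "sge (length v) (mon v)"
  by (auto simp: sge_def mon_def ncmon_def)
lemma sge_0: "sge 0 a"
  by (auto simp: sge_def)

lemma mon_append: "mon (a @ b) = mon a * mon b"
proof (rule Rep_nc_eqI)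
  fix w
  have "Rep_nc (mon a * mon b) w = (\<Sum>k\<le>length w. if k = length a \<and> w = a @ b then 1 else 0)"
    unfolding Rep_nc_mult ncmult_def mon_def
    by (intro sum.cong refl) (auto simp: ncmon_def append_eq_conv_conj)
  also have "\<dots> = (if w = a @ b then 1 else 0)"
    by (auto simp: sum.delta)
  finally show "Rep_nc (mon (a @ b)) w = Rep_nc (mon a * mon b) w"
    by (simp add: mon_def ncmon_def)
qed

lemma mon_Nil: "mon [] = 1"
  by (simp add: mon_def one_nc_Rep ncone_def)
lemma mon_Cons: "mon (a # b) = mon [a] * mon b"
  using mon_append[of "[a]" b] by simp

lemma Rep_sc_mult: "Rep_nc (sc c * a) w = c * Rep_nc a w"
proof -
  have "Rep_nc (sc c * a) w = (\<Sum>k\<le>length w. if k = 0 then c * Rep_nc a w else 0)"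
    unfolding Rep_nc_mult ncmult_def sc_def
    by (intro sum.cong refl) (auto simp: ncsmult_def ncone_def ncmon_def)
  then show ?thesis by simp
qed
lemma Rep_mult_sc: "Rep_nc (a * sc c) w = c * Rep_nc a w"
proof -
  have "Rep_nc (a * sc c) w = (\<Sum>k\<le>length w. if k = length w then c * Rep_nc a w else 0)"
    unfolding Rep_nc_mult ncmult_def sc_def
    by (intro sum.cong refl) (auto simp: ncsmult_def ncone_def ncmon_def)
  then show ?thesis by simp
qed
lemma sc_comm: "sc c * a = a * sc c"
  by (rule Rep_nc_eqI) (simp add: Rep_sc_mult Rep_mult_sc)
lemma Rep_sc: "Rep_nc (sc c) w = c * ncone w"
  by (simp add: sc_def ncsmult_def)
lemma sc_mult: "sc c * sc d = sc (c * d)"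
  by (rule Rep_nc_eqI) (simp add: Rep_sc_mult Rep_sc)
lemma sc_add: "sc c + sc d = sc (c + d)"
  by (rule Rep_nc_eqI) (simp add: Rep_nc_add sc_def ncsmult_def algebra_simps)
lemma sc_one: "sc 1 = 1"
  by (simp add: sc_def ncsmult_def one_nc_Rep)
lemma sc_zero: "sc 0 = 0"
  by (simp add: sc_def ncsmult_def zero_nc_Rep nczero_def)
lemma sc_uminus: "sc (- c) = - sc c"
  by (rule Rep_nc_eqI) (simp add: Rep_nc_uminus sc_def ncsmult_def)
lemma sc_diff: "sc (c - d) = sc c - sc d"
  by (rule Rep_nc_eqI) (simp add: Rep_nc_diff sc_def ncsmult_def algebra_simps)
lemma sc_of_nat: "sc (of_nat n) = of_nat n"
  by (induction n) (simp_all add: sc_zero sc_one flip: sc_add)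
lemma sge_sc_mult: "sge d a \<Longrightarrow> sge d (sc c * a)"
  by (auto simp: sge_def Rep_sc_mult)

lemma NL_sc: "NL F (sc c * a) = sc c * NL F a"
proof -
  have "sc c * a = Abs_nc (ncsmult c (Rep_nc a))"
    by (rule Rep_nc_eqI) (simp add: Rep_sc_mult ncsmult_def)
  moreover have "sc c * NL F a = Abs_nc (ncsmult c (Rep_nc (NL F a)))"
    by (rule Rep_nc_eqI) (simp add: Rep_sc_mult ncsmult_def)
  ultimately show ?thesis by (simp add: NL_def nclin_smult)
qed

lemma NL_one: "lndn F \<Longrightarrow> NL F 1 = F []"
  using NL_mon[of F "[]"] by (simp add: mon_Nil)
lemma NL_sc1: "lndn F \<Longrightarrow> NL F (sc c) = sc c * F []"
  using NL_sc[of F c 1] NL_one[of F] by simp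


lemma Abs_add: "Abs_nc (ncadd f g) = Abs_nc f + Abs_nc g" by (simp add: plus_nc_Rep)
lemma Abs_mult: "Abs_nc (ncmult f g) = Abs_nc f * Abs_nc g" by (simp add: times_nc_Rep)
lemma Abs_neg: "Abs_nc (ncneg f) = - Abs_nc f" by (simp add: uminus_nc_Rep)
lemma Abs_smult: "Abs_nc (ncsmult c f) = sc c * Abs_nc f"
  by (rule Rep_nc_eqI) (simp add: Rep_sc_mult ncsmult_def)
lemma Abs_one: "Abs_nc ncone = 1" by (simp add: one_nc_Rep)
lemma Abs_zero: "Abs_nc nczero = 0" by (simp add: zero_nc_Rep)
lemma Abs_pow: "Abs_nc (ncpow f n) = Abs_nc f ^ n"
  by (induction n) (simp_all add: Abs_one Abs_mult)

definition xn :: nc where "xn = mon [X]"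
definition yn :: nc where "yn = mon [Y]"
definition zn :: nc where "zn = xn + yn"

lemma Abs_ncx: "Abs_nc ncx = xn" by (simp add: ncx_def xn_def mon_def)
lemma Abs_ncy: "Abs_nc ncy = yn" by (simp add: ncy_def yn_def mon_def)

definition sw :: "rat poly \<Rightarrow> word \<Rightarrow> nc" where "sw c v = Abs_nc (sigma_word c v)"
definition sl :: "rat poly \<Rightarrow> letter \<Rightarrow> nc" where "sl c a = Abs_nc (sigma_letter c a)"
definition sgm :: "rat poly \<Rightarrow> nc \<Rightarrow> nc" where "sgm c = NL (sw c)"

lemma sl_X: "sl c X = xn" by (simp add: sl_def Abs_ncx)
lemma sl_Y: "sl c Y = sc c * xn + yn" by (simp add: sl_def Abs_add Abs_smult Abs_ncx Abs_ncy)
lemma sw_Nil: "sw c [] = 1" by (simp add: sw_def Abs_one)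
lemma sw_Cons: "sw c (a # v) = sl c a * sw c v" by (simp add: sw_def sl_def Abs_mult)
lemma sw_append: "sw c (a @ b) = sw c a * sw c b"
  by (induction a) (simp_all add: sw_Nil sw_Cons mult.assoc)

lemma sge_xn: "sge 1 xn" using sge_mon[of "[X]"] by (simp add: xn_def)
lemma sge_yn: "sge 1 yn" using sge_mon[of "[Y]"] by (simp add: yn_def)
lemma sge_sl: "sge 1 (sl c a)"
proof (cases a)
  case X then show ?thesis by (simp only: sl_X sge_xn)
next
  case Y then show ?thesis by (simp only: sl_Y) (intro sge_add sge_sc_mult sge_xn sge_yn)
qed
lemma sge_sw: "sge (length v) (sw c v)"
proof (induction v)
  case Nil then show ?case by (simp add: sge_0)
next
  case (Cons a v) then show ?case using sge_mult[OF sge_sl Cons] by (simp add: sw_Cons)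
qed
lemma lndn_sw: "lndn (sw c)" by (rule lndn_sge) (rule sge_sw)
lemma lndn_zero: "lndn (\<lambda>v. 0)" by (rule lndn_sge) (rule sge_zero)

lemma sgm_add: "sgm c (a + b) = sgm c a + sgm c b" by (simp add: sgm_def NL_add)
lemma sgm_diff: "sgm c (a - b) = sgm c a - sgm c b" by (simp add: sgm_def NL_diff)
lemma sgm_uminus: "sgm c (- a) = - sgm c a" by (simp add: sgm_def NL_uminus)
lemma sgm_zero: "sgm c 0 = 0" by (simp add: sgm_def NL_zero)
lemma sgm_sum: "sgm c (sum f A) = (\<Sum>i\<in>A. sgm c (f i))" by (simp add: sgm_def NL_sum)
lemma sgm_mon: "sgm c (mon v) = sw c v" by (simp add: sgm_def NL_mon lndn_sw)
lemma sgm_one: "sgm c 1 = 1" using sgm_mon[of c "[]"] by (simp add: mon_Nil sw_Nil)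
lemma sgm_sc_mult: "sgm c (sc d * a) = sc d * sgm c a" by (simp add: sgm_def NL_sc)
lemma sgm_sc: "sgm c (sc d) = sc d" using sgm_sc_mult[of c d 1] by (simp add: sgm_one)
lemma sgm_mult: "sgm c (a * b) = sgm c a * sgm c b"
proof -
  have "NL (sw c) (a * b) = NL (sw c) a * NL (sw c) b + NL (\<lambda>v. 0) a * NL (\<lambda>v. 0) b"
    by (rule NL_KK) (simp_all add: lndn_sw lndn_zero sw_append)
  then show ?thesis by (simp add: sgm_def NL_Fzero)
qed
lemma sgm_xn: "sgm c xn = xn"
proof -
  have "sgm c xn = sw c [X]" by (simp add: xn_def sgm_mon)
  then show ?thesis by (simp add: sw_Cons sw_Nil sl_X)
qed
lemma sgm_yn: "sgm c yn = sc c * xn + yn"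
proof -
  have "sgm c yn = sw c [Y]" by (simp add: yn_def sgm_mon)
  then show ?thesis by (simp add: sw_Cons sw_Nil sl_Y)
qed
lemma sgm_pow: "sgm c (a ^ n) = sgm c a ^ n"
  by (induction n) (simp_all add: sgm_one sgm_mult)

lemma sgm_sw_inv: "sgm c (sw (- c) v) = mon v"
proof (induction v)
  case Nil then show ?case by (simp add: sw_Nil sgm_one mon_Nil)
next
  case (Cons a v)
  have "sgm c (sl (- c) a) = mon [a]"
  proof (cases a)
    case X then show ?thesis using sgm_xn[of c] by (simp add: sl_X xn_def)
  next
    case Y
    have "sgm c (sl (- c) a) = sc (- c) * xn + (sc c * xn + yn)"
      by (simp add: Y sl_Y sgm_add sgm_sc_mult sgm_xn sgm_yn)
    also have "\<dots> = (sc (- c) + sc c) * xn + yn" by (simp add: algebra_simps)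
    also have "\<dots> = yn" by (simp add: sc_add sc_zero)
    finally show ?thesis by (simp add: Y yn_def)
  qed
  then show ?case by (simp add: sw_Cons sgm_mult Cons.IH flip: mon_Cons)
qed

lemma sgm_inv: "sgm c (sgm (- c) a) = a"
proof -
  have "sgm c (sgm (- c) a) = NL (\<lambda>v. sgm c (sw (- c) v)) a"
    unfolding sgm_def by (rule NL_comp) (simp_all add: lndn_sw)
  also have "\<dots> = a" by (simp add: sgm_sw_inv NL_id)
  finally show ?thesis .
qed

definition Sw :: "rat poly \<Rightarrow> word \<Rightarrow> nc" where "Sw c v = Abs_nc (S_word c v)"
definition Sn :: "rat poly \<Rightarrow> nc \<Rightarrow> nc" where "Sn c = NL (Sw c)"

lemma Sw_eq: "Sw c v = (if v = [] then 1 else sw c (butlast v) * mon [last v])"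
  by (simp add: Sw_def S_word_def Abs_one Abs_mult sw_def mon_def)
lemma sge_Sw: "sge (length v) (Sw c v)"
proof (cases "v = []")
  case True then show ?thesis by (simp add: sge_0)
next
  case False
  then have "length v = length (butlast v) + length [last v]" by simp
  then show ?thesis using False sge_mult[OF sge_sw[of "butlast v" c] sge_mon[of "[last v]"]]
    by (simp add: Sw_eq)
qed
lemma lndn_Sw: "lndn (Sw c)" by (rule lndn_sge) (rule sge_Sw)

lemma Sn_eq: "Sop c f = Rep_nc (Sn c (Abs_nc f))"
  by (simp add: Sop_def Sn_def NL_def Sw_def)

lemma Sn_add: "Sn c (a + b) = Sn c a + Sn c b" by (simp add: Sn_def NL_add)
lemma Sn_diff: "Sn c (a - b) = Sn c a - Sn c b" by (simp add: Sn_def NL_diff)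
lemma Sn_zero: "Sn c 0 = 0" by (simp add: Sn_def NL_zero)
lemma Sn_sum: "Sn c (sum f A) = (\<Sum>i\<in>A. Sn c (f i))" by (simp add: Sn_def NL_sum)
lemma Sn_sc_mult: "Sn c (sc d * a) = sc d * Sn c a" by (simp add: Sn_def NL_sc)

lemma Sn_mult_letter: "Sn c (p * mon [l]) = sgm c p * mon [l]"
proof -
  have "NL (Sw c) (p * mon [l]) = NL (sw c) p * NL mon (mon [l]) + NL (\<lambda>v. 0) p * NL (\<lambda>v. 0) (mon [l])"
  proof (rule NL_KK)
    show "lndn (Sw c)" "lndn (sw c)" "lndn mon" "lndn (\<lambda>v. 0)" "lndn (\<lambda>v. 0)"
      by (simp_all add: lndn_Sw lndn_sw lndn_mon lndn_zero)
    fix a b assume "Rep_nc (mon [l]) b \<noteq> 0"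
    then have "b = [l]" by (auto simp: mon_def ncmon_def split: if_splits)
    then show "Sw c (a @ b) = sw c a * mon b + 0 * 0" by (simp add: Sw_eq)
  qed
  then show ?thesis by (simp add: Sn_def sgm_def NL_id NL_Fzero)
qed

lemma Sn_one: "Sn c 1 = 1" by (simp add: Sn_def NL_one lndn_Sw Sw_eq)

lemma Sn_inv: "Sn c (Sn (- c) a) = a"
proof -
  have "Sn c (Sn (- c) a) = NL (\<lambda>v. Sn c (Sw (- c) v)) a"
    unfolding Sn_def by (rule NL_comp) (simp_all add: lndn_Sw)
  also have "(\<lambda>v. Sn c (Sw (- c) v)) = mon"
  proof
    fix v
    show "Sn c (Sw (- c) v) = mon v"
    proof (cases "v = []")
      case True then show ?thesis by (simp add: Sw_eq Sn_one mon_Nil)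
    next
      case False
      then have "Sn c (Sw (- c) v) = mon (butlast v) * mon [last v]"
        by (simp add: Sw_eq Sn_mult_letter sgm_sw_inv)
      also have "\<dots> = mon v" using False by (simp flip: mon_append)
      finally show ?thesis .
    qed
  qed
  finally show ?thesis by (simp add: NL_id)
qed

section \<open>derivations\<close>

definition dl :: "nat \<Rightarrow> letter \<Rightarrow> nc" where "dl n a = Abs_nc (dletter n a)"
definition dw :: "nat \<Rightarrow> word \<Rightarrow> nc" where "dw n v = Abs_nc (dword n v)"
definition dn :: "nat \<Rightarrow> nc \<Rightarrow> nc" where "dn n = NL (dw n)"

definition AA :: "nat \<Rightarrow> nc" where "AA n = xn * (zn ^ (n - 1) * yn)"

lemma dl_X: "dl n X = AA n"
  by (simp add: dl_def dletter_def AA_def Abs_mult Abs_pow Abs_add Abs_ncx Abs_ncy zn_def)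
lemma dl_Y: "dl n Y = - AA n"
  by (simp add: dl_def dletter_def AA_def Abs_mult Abs_pow Abs_add Abs_ncx Abs_ncy Abs_neg zn_def)

lemma dw_eq: "dw n w = (\<Sum>i<length w. mon (take i w) * (dl n (w ! i) * mon (drop (Suc i) w)))"
proof (rule Rep_nc_eqI)
  fix v
  show "Rep_nc (dw n w) v = Rep_nc (\<Sum>i<length w. mon (take i w) * (dl n (w ! i) * mon (drop (Suc i) w))) v"
    by (simp add: dw_def dword_def Rep_nc_sum Rep_nc_mult mon_def dl_def)
qed

lemma dw_Nil: "dw n [] = 0" by (simp add: dw_eq)
lemma dw_Cons: "dw n (a # w) = dl n a * mon w + mon [a] * dw n w"
proof -
  have "dw n (a # w) = mon (take 0 (a # w)) * (dl n ((a # w) ! 0) * mon (drop (Suc 0) (a # w)))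
     + (\<Sum>i<length w. mon (take (Suc i) (a # w)) * (dl n ((a # w) ! Suc i) * mon (drop (Suc (Suc i)) (a # w))))"
    unfolding dw_eq by (simp add: sum.lessThan_Suc_shift del: sum.lessThan_Suc)
  also have "\<dots> = dl n a * mon w + mon [a] * dw n w"
    by (simp add: dw_eq mon_Nil sum_distrib_left) (rule sum.cong[OF refl], subst mon_Cons, simp add: mult.assoc)
  finally show ?thesis .
qed
lemma dw_append: "dw n (a @ b) = dw n a * mon b + mon a * dw n b"
proof (induction a)
  case Nil then show ?case by (simp add: dw_Nil mon_Nil)
next
  case (Cons a1 a2)
  have m: "mon (a1 # a2) = mon [a1] * mon a2" by (rule mon_Cons)
  have "dw n ((a1 # a2) @ b) = dl n a1 * (mon a2 * mon b) + mon [a1] * (dw n a2 * mon b + mon a2 * dw n b)"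
    by (simp add: dw_Cons Cons.IH mon_append)
  also have "\<dots> = (dl n a1 * mon a2 + mon [a1] * dw n a2) * mon b + (mon [a1] * mon a2) * dw n b"
    by (simp add: algebra_simps)
  finally show ?case by (simp add: dw_Cons m)
qed

lemma sge_AA: "sge 1 (AA n)"
  using sge_mult[OF sge_xn sge_0, of "zn ^ (n - 1) * yn"] by (simp add: AA_def)
lemma sge_dl: "sge 1 (dl n a)"
proof (cases a)
  case X then show ?thesis by (simp only: dl_X sge_AA)
next
  case Y then show ?thesis by (simp only: dl_Y) (intro sge_uminus sge_AA)
qed
lemma sge_dw: "sge (length v) (dw n v)"
proof (induction v)
  case Nil then show ?case by (simp add: sge_0)
next
  case (Cons a v)
  have "sge (1 + length v) (dl n a * mon v)" by (rule sge_mult[OF sge_dl sge_mon])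
  moreover have "sge (length [a] + length v) (mon [a] * dw n v)" by (rule sge_mult[OF sge_mon Cons])
  ultimately show ?case by (simp add: dw_Cons sge_add)
qed
lemma lndn_dw: "lndn (dw n)" by (rule lndn_sge) (rule sge_dw)

lemma dn_add: "dn n (a + b) = dn n a + dn n b" by (simp add: dn_def NL_add)
lemma dn_diff: "dn n (a - b) = dn n a - dn n b" by (simp add: dn_def NL_diff)
lemma dn_uminus: "dn n (- a) = - dn n a" by (simp add: dn_def NL_uminus)
lemma dn_zero: "dn n 0 = 0" by (simp add: dn_def NL_zero)
lemma dn_sum: "dn n (sum f A) = (\<Sum>i\<in>A. dn n (f i))" by (simp add: dn_def NL_sum)
lemma dn_sc_mult: "dn n (sc d * a) = sc d * dn n a" by (simp add: dn_def NL_sc)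
lemma dn_mon: "dn n (mon v) = dw n v" by (simp add: dn_def NL_mon lndn_dw)
lemma dn_one: "dn n 1 = 0" using dn_mon[of n "[]"] by (simp add: mon_Nil dw_Nil)
lemma dn_sc: "dn n (sc d) = 0" using dn_sc_mult[of n d 1] by (simp add: dn_one)
lemma dn_mult: "dn n (a * b) = dn n a * b + a * dn n b"
proof -
  have "NL (dw n) (a * b) = NL (dw n) a * NL mon b + NL mon a * NL (dw n) b"
    by (rule NL_KK) (simp_all add: lndn_dw lndn_mon dw_append)
  then show ?thesis by (simp add: dn_def NL_id)
qed
lemma dn_xn: "dn n xn = AA n" by (simp add: xn_def dn_mon dw_Cons dw_Nil mon_Nil dl_X)
lemma dn_yn: "dn n yn = - AA n" by (simp add: yn_def dn_mon dw_Cons dw_Nil mon_Nil dl_Y)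
lemma dn_zn: "dn n zn = 0" by (simp add: zn_def dn_add dn_xn dn_yn)
lemma dn_zn_pow: "dn n (zn ^ k) = 0"
  by (induction k) (simp_all add: dn_one dn_mult dn_zn)

lemma dn_dn_xn: "dn n (dn m xn) = dn m (dn n xn)"
proof -
  have e: "dn n (dn m xn) = AA n * zn ^ (m - 1) * yn - xn * zn ^ (m - 1) * AA n" for n m
    by (simp add: dn_xn AA_def dn_mult dn_yn dn_zn_pow mult.assoc algebra_simps)
  have x: "xn = zn - yn" by (simp add: zn_def)
  have zz: "zn ^ a * zn * zn ^ b = zn ^ (a + b + 1)" for a b
    by (simp add: power_add mult.assoc power_commutes)
  have e2: "dn n (dn m xn) = xn * zn ^ (n - 1) * yn * zn ^ (m - 1) * yn + xn * zn ^ (m - 1) * yn * zn ^ (n - 1) * yn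
       - xn * zn ^ ((m - 1) + (n - 1) + 1) * yn" for n m
  proof -
    have "xn * zn ^ (m - 1) * AA n = xn * zn ^ (m - 1) * ((zn - yn) * zn ^ (n - 1) * yn)"
      by (simp add: AA_def mult.assoc flip: x)
    also have "\<dots> = xn * (zn ^ (m - 1) * zn * zn ^ (n - 1)) * yn - xn * zn ^ (m - 1) * yn * zn ^ (n - 1) * yn"
      by (simp add: algebra_simps)
    also have "\<dots> = xn * zn ^ ((m - 1) + (n - 1) + 1) * yn - xn * zn ^ (m - 1) * yn * zn ^ (n - 1) * yn"
      by (simp only: zz)
    finally show ?thesis unfolding e by (simp add: AA_def mult.assoc)
  qed
  show ?thesis unfolding e2 by (simp add: ac_simps)
qed

lemma dn_dn_mon: "dn n (dn m (mon v)) = dn m (dn n (mon v))"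
proof (induction v)
  case Nil then show ?case by (simp add: mon_Nil dn_one dn_zero)
next
  case (Cons a v)
  have l: "dn n (dn m (mon [a])) = dn m (dn n (mon [a]))"
  proof (cases a)
    case X then show ?thesis using dn_dn_xn by (simp add: xn_def)
  next
    case Y
    have "dn n (dn m yn) = dn m (dn n yn)"
      using dn_dn_xn[of n m] by (simp add: dn_yn dn_uminus flip: dn_xn)
    then show ?thesis by (simp add: Y yn_def)
  qed
  show ?case
    by (simp add: mon_Cons[of a v] dn_mult dn_add Cons.IH l algebra_simps)
qed

lemma dn_comm: "dn n (dn m a) = dn m (dn n a)"
proof -
  have "dn n (dn m a) = NL (\<lambda>v. dn n (dw m v)) a"
    unfolding dn_def by (rule NL_comp) (simp_all add: lndn_dw)
  also have "\<dots> = NL (\<lambda>v. dn m (dw n v)) a"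
    using dn_dn_mon by (simp add: dn_mon[symmetric])
  also have "\<dots> = dn m (dn n a)"
    unfolding dn_def by (rule NL_comp[symmetric]) (simp_all add: lndn_dw)
  finally show ?thesis .
qed


unbundle fps_syntax

definition is_der :: "('a::ring_1 \<Rightarrow> 'a) \<Rightarrow> bool" where
  "is_der D \<longleftrightarrow> (\<forall>a b. D (a + b) = D a + D b) \<and> (\<forall>a b. D (a * b) = D a * b + a * D b)"

lemma is_derI: "(\<And>a b. D (a + b) = D a + D b) \<Longrightarrow> (\<And>a b. D (a * b) = D a * b + a * D b) \<Longrightarrow> is_der D"
  by (simp add: is_der_def)

context
  fixes D :: "'a::ring_1 \<Rightarrow> 'a"
  assumes der: "is_der D"
begin
lemma der_add: "D (a + b) = D a + D b" using der by (simp add: is_der_def)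
lemma der_mult: "D (a * b) = D a * b + a * D b" using der by (simp add: is_der_def)
lemma der_zero: "D 0 = 0" using der_add[of 0 0] by simp
lemma der_uminus: "D (- a) = - D a"
  using minus_unique[of "D a" "D (- a)"] der_add[of a "- a"] der_zero by simp
lemma der_diff: "D (a - b) = D a - D b" using der_add[of a "- b"] der_uminus by simp
lemma der_sum: "D (sum f A) = (\<Sum>i\<in>A. D (f i))"
  by (induction A rule: infinite_finite_induct) (simp_all add: der_zero der_add)
lemma der_of_nat_mult: "D (of_nat k * a) = of_nat k * D a"
  by (induction k) (simp_all add: der_zero der_add algebra_simps)
lemma der_pow_add: "(D ^^ k) (a + b) = (D ^^ k) a + (D ^^ k) b"
  by (induction k) (simp_all add: der_add)
lemma der_pow_zero: "(D ^^ k) 0 = 0"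
  by (induction k) (simp_all add: der_zero)
lemma der_pow_sum: "(D ^^ k) (sum f A) = (\<Sum>i\<in>A. (D ^^ k) (f i))"
  by (induction A rule: infinite_finite_induct) (simp_all add: der_pow_zero der_pow_add)
lemma der_pow_uminus: "(D ^^ k) (- a) = - (D ^^ k) a"
  by (induction k) (simp_all add: der_uminus)
lemma der_pow_diff: "(D ^^ k) (a - b) = (D ^^ k) a - (D ^^ k) b"
  by (induction k) (simp_all add: der_diff)
end

lemma pascal_sum:
  fixes F :: "nat \<Rightarrow> nat \<Rightarrow> 'a::ring_1"
  shows "(\<Sum>k\<le>n. of_nat (n choose k) * (F (Suc k) (n - k) + F k (Suc (n - k))))
       = (\<Sum>k\<le>Suc n. of_nat (Suc n choose k) * F k (Suc n - k))"
proof -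
  have A: "(\<Sum>k\<le>n. of_nat (n choose Suc k) * F (Suc k) (n - k))
        = (\<Sum>k\<le>n. of_nat (n choose k) * F k (Suc (n - k))) - F 0 (Suc n)"
  proof -
    have "(\<Sum>k\<le>Suc n. of_nat (n choose k) * F k (Suc n - k)) =
          of_nat (n choose 0) * F 0 (Suc n - 0) + (\<Sum>k\<le>n. of_nat (n choose Suc k) * F (Suc k) (Suc n - Suc k))"
      by (rule sum.atMost_Suc_shift)
    moreover have "(\<Sum>k\<le>Suc n. of_nat (n choose k) * F k (Suc n - k)) = (\<Sum>k\<le>n. of_nat (n choose k) * F k (Suc n - k))"
      by (simp add: binomial_eq_0)
    moreover have "(\<Sum>k\<le>n. of_nat (n choose k) * F k (Suc n - k)) = (\<Sum>k\<le>n. of_nat (n choose k) * F k (Suc (n - k)))"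
      by (intro sum.cong refl) (simp add: Suc_diff_le)
    ultimately show ?thesis by (simp add: algebra_simps)
  qed
  have "(\<Sum>k\<le>Suc n. of_nat (Suc n choose k) * F k (Suc n - k))
      = F 0 (Suc n) + (\<Sum>k\<le>n. of_nat (Suc n choose Suc k) * F (Suc k) (n - k))"
    by (subst sum.atMost_Suc_shift) simp
  also have "\<dots> = F 0 (Suc n) + (\<Sum>k\<le>n. of_nat (n choose k) * F (Suc k) (n - k))
        + (\<Sum>k\<le>n. of_nat (n choose Suc k) * F (Suc k) (n - k))"
    by (simp add: sum.distrib algebra_simps)
  also have "\<dots> = (\<Sum>k\<le>n. of_nat (n choose k) * (F (Suc k) (n - k) + F k (Suc (n - k))))"
    unfolding A by (simp add: sum.distrib algebra_simps)
  finally show ?thesis by simp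
qed

lemma leibniz:
  assumes "is_der D"
  shows "(D ^^ n) (a * b) = (\<Sum>k\<le>n. of_nat (n choose k) * ((D ^^ k) a * (D ^^ (n - k)) b))"
proof (induction n)
  case 0 then show ?case by simp
next
  case (Suc n)
  have "(D ^^ Suc n) (a * b) = (\<Sum>k\<le>n. of_nat (n choose k) * D ((D ^^ k) a * (D ^^ (n - k)) b))"
    by (simp add: Suc.IH der_sum[OF assms] der_of_nat_mult[OF assms])
  also have "\<dots> = (\<Sum>k\<le>n. of_nat (n choose k) * ((D ^^ Suc k) a * (D ^^ (n - k)) b + (D ^^ k) a * (D ^^ Suc (n - k)) b))"
    by (simp add: der_mult[OF assms])
  also have "\<dots> = (\<Sum>k\<le>Suc n. of_nat (Suc n choose k) * ((D ^^ k) a * (D ^^ (Suc n - k)) b))"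
    by (rule pascal_sum[where F="\<lambda>i j. (D ^^ i) a * (D ^^ j) b"])
  finally show ?case .
qed

lemma fps_mult_local_left:
  fixes A B C :: "'a::ring_1 fps"
  assumes "\<And>i. i \<le> j \<Longrightarrow> A $ i = B $ i"
  shows "(A * C) $ j = (B * C) $ j"
  using assms by (simp add: fps_mult_nth)
lemma fps_mult_local_right:
  fixes A B C :: "'a::ring_1 fps"
  assumes "\<And>i. i \<le> j \<Longrightarrow> A $ i = B $ i"
  shows "(C * A) $ j = (C * B) $ j"
  using assms by (simp add: fps_mult_nth)

definition vb :: "nat \<Rightarrow> 'a::zero fps \<Rightarrow> bool" where "vb m A \<longleftrightarrow> (\<forall>i<m. A $ i = 0)"

lemma vb_mult:
  fixes A B :: "'a::ring_1 fps"
  assumes "vb a A" "vb b B" shows "vb (a + b) (A * B)"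
  unfolding vb_def fps_mult_nth
proof (intro allI impI sum.neutral ballI)
  fix i k assume "i < a + b" "k \<in> {0..i}"
  then show "A $ k * B $ (i - k) = 0" using assms unfolding vb_def
    by (cases "k < a") auto
qed
lemma vb_0: "vb 0 A" by (simp add: vb_def)

definition central :: "'a::ring_1 \<Rightarrow> bool" where "central c \<longleftrightarrow> (\<forall>a. c * a = a * c)"

lemma centralD: "central c \<Longrightarrow> c * a = a * c"
  by (simp add: central_def)
lemma centralI: "(\<And>a. c * a = a * c) \<Longrightarrow> central c"
  by (simp add: central_def)
lemma central_fps_const:
  fixes c :: "'a::ring_1"
  assumes "central c" shows "central (fps_const c)"
proof (rule centralI, rule fps_ext)
  fix a :: "'a fps" and n
  show "(fps_const c * a) $ n = (a * fps_const c) $ n"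
    using centralD[OF assms, of "a $ n"] by simp
qed
lemma central_fps_X: "central (fps_X :: 'a::ring_1 fps)"
  by (rule centralI) (rule fps_mult_fps_X_commute)
lemma central_mult: "central a \<Longrightarrow> central b \<Longrightarrow> central (a * b)"
  by (rule centralI) (metis centralD mult.assoc)
lemma central_pow: "central a \<Longrightarrow> central (a ^ n)"
proof (induction n)
  case 0 then show ?case by (simp add: central_def)
next
  case (Suc n) then show ?case using central_mult[of a "a ^ n"] by simp
qed
lemma central_one: "central 1" by (simp add: central_def)
lemma central_sc: "central (sc c)"
  by (rule centralI) (rule sc_comm)

lemma is_der_sum:
  assumes "finite A" "\<And>n. n \<in> A \<Longrightarrow> is_der (D n)"
  shows "is_der (\<lambda>a. \<Sum>n\<in>A. D n a)"
  using assms
proof (induction A rule: finite_induct)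
  case empty then show ?case by (simp add: is_der_def)
next
  case (insert x F)
  have dx: "is_der (D x)" using insert by simp
  have S: "is_der (\<lambda>a. \<Sum>n\<in>F. D n a)" using insert by simp
  show ?case
  proof (rule is_derI)
    fix a b
    show "(\<Sum>n\<in>insert x F. D n (a + b)) = (\<Sum>n\<in>insert x F. D n a) + (\<Sum>n\<in>insert x F. D n b)"
      using insert(1,2) der_add[OF dx] der_add[OF S] by (simp add: ac_simps)
    have "(\<Sum>n\<in>insert x F. D n (a * b)) = (D x a * b + a * D x b) + ((\<Sum>n\<in>F. D n a) * b + a * (\<Sum>n\<in>F. D n b))"
      using insert(1,2) der_mult[OF dx] der_mult[OF S] by simp
    also have "\<dots> = (D x a + (\<Sum>n\<in>F. D n a)) * b + a * (D x b + (\<Sum>n\<in>F. D n b))"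
      by (simp add: distrib_left distrib_right ac_simps)
    finally show "(\<Sum>n\<in>insert x F. D n (a * b)) = (\<Sum>n\<in>insert x F. D n a) * b + a * (\<Sum>n\<in>insert x F. D n b)"
      using insert(1,2) by simp
  qed
qed

lemma is_der_central:
  assumes "is_der D" "central c" shows "is_der (\<lambda>a. c * D a)"
proof (rule is_derI)
  have cm: "c * a = a * c" for a using assms(2) by (rule centralD)
  fix a b
  show "c * D (a + b) = c * D a + c * D b" by (simp add: der_add[OF assms(1)] distrib_left)
  have "c * D (a * b) = c * D a * b + (c * a) * D b"
    by (simp add: der_mult[OF assms(1)] distrib_left mult.assoc)
  also have "\<dots> = c * D a * b + a * (c * D b)" by (simp add: cm[of a] mult.assoc)
  finally show "c * D (a * b) = c * D a * b + a * (c * D b)" .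
qed

section \<open>Series in v with nc coefficients\<close>

type_synonym V = "nc fps"

definition Vmap :: "(nc \<Rightarrow> nc) \<Rightarrow> V \<Rightarrow> V" where "Vmap f \<phi> = Abs_fps (\<lambda>j. f (\<phi> $ j))"

lemma Vmap_nth[simp]: "Vmap f \<phi> $ j = f (\<phi> $ j)" by (simp add: Vmap_def)

lemma is_der_Vmap:
  assumes "is_der f" shows "is_der (Vmap f)"
proof (rule is_derI)
  fix a b :: V
  show "Vmap f (a + b) = Vmap f a + Vmap f b"
    by (rule fps_ext) (simp add: der_add[OF assms])
  show "Vmap f (a * b) = Vmap f a * b + a * Vmap f b"
    by (rule fps_ext) (simp add: fps_mult_nth der_sum[OF assms] der_mult[OF assms] sum.distrib)
qed

lemma is_der_dn: "is_der (dn n)"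
  by (simp add: is_der_def dn_add dn_mult)

definition rr :: "rat \<Rightarrow> nc" where "rr q = sc [:q:]"
lemma central_rr: "central (rr q)" by (simp add: rr_def central_sc)
lemma rr_mult: "rr p * rr q = rr (p * q)" by (simp add: rr_def sc_mult mult.commute)
lemma of_nat_sc: "(of_nat n :: nc) = rr (of_nat n)"
  unfolding rr_def of_nat_poly[symmetric] sc_of_nat ..
lemma rr_one: "rr 1 = 1" unfolding rr_def by (metis one_pCons sc_one)

definition Dd :: "V \<Rightarrow> V" where
  "Dd \<phi> = Abs_fps (\<lambda>j. \<Sum>n\<in>{1..j}. rr (1 / of_nat n) * dn n (\<phi> $ (j - n)))"
definition D1 :: "V \<Rightarrow> V" where
  "D1 \<phi> = Abs_fps (\<lambda>j. \<Sum>n\<in>{1..j}. dn n (\<phi> $ (j - n)))"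

definition DN :: "nat \<Rightarrow> V \<Rightarrow> V" where
  "DN N \<phi> = (\<Sum>n\<in>{1..N}. fps_const (rr (1 / of_nat n)) * fps_X ^ n * Vmap (dn n) \<phi>)"
definition D1N :: "nat \<Rightarrow> V \<Rightarrow> V" where
  "D1N N \<phi> = (\<Sum>n\<in>{1..N}. fps_X ^ n * Vmap (dn n) \<phi>)"

lemma is_der_DN: "is_der (DN N)"
  unfolding DN_def
  by (intro is_der_sum is_der_central is_der_Vmap is_der_dn central_mult central_pow central_fps_X
      central_fps_const central_rr) auto
lemma is_der_D1N: "is_der (D1N N)"
  unfolding D1N_def
  by (intro is_der_sum is_der_central is_der_Vmap is_der_dn central_pow central_fps_X) auto

lemma DN_nth: "j \<le> N \<Longrightarrow> DN N \<phi> $ j = Dd \<phi> $ j"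
proof -
  assume j: "j \<le> N"
  have "DN N \<phi> $ j = (\<Sum>n\<in>{1..N}. rr (1 / of_nat n) * (if j < n then 0 else dn n (\<phi> $ (j - n))))"
    by (simp add: DN_def fps_sum_nth mult.assoc fps_X_power_mult_nth cong: if_cong)
  also have "\<dots> = (\<Sum>n\<in>{1..j}. rr (1 / of_nat n) * dn n (\<phi> $ (j - n)))"
    using j by (intro sum.mono_neutral_cong_right) auto
  finally show ?thesis by (simp add: Dd_def)
qed
lemma D1N_nth: "j \<le> N \<Longrightarrow> D1N N \<phi> $ j = D1 \<phi> $ j"
proof -
  assume j: "j \<le> N"
  have "D1N N \<phi> $ j = (\<Sum>n\<in>{1..N}. if j < n then 0 else dn n (\<phi> $ (j - n)))"
    by (simp add: D1N_def fps_sum_nth fps_X_power_mult_nth cong: if_cong)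
  also have "\<dots> = (\<Sum>n\<in>{1..j}. dn n (\<phi> $ (j - n)))"
    using j by (intro sum.mono_neutral_cong_right) auto
  finally show ?thesis by (simp add: D1_def)
qed

lemma Dd_local: "(\<And>i. i \<le> j \<Longrightarrow> \<phi> $ i = \<psi> $ i) \<Longrightarrow> Dd \<phi> $ j = Dd \<psi> $ j"
  by (simp add: Dd_def)
lemma D1_local: "(\<And>i. i \<le> j \<Longrightarrow> \<phi> $ i = \<psi> $ i) \<Longrightarrow> D1 \<phi> $ j = D1 \<psi> $ j"
  by (simp add: D1_def)

lemma is_der_Dd: "is_der Dd"
proof (rule is_derI)
  fix a b :: V
  show "Dd (a + b) = Dd a + Dd b"
    by (simp add: fps_eq_iff Dd_def dn_add sum.distrib algebra_simps)
  show "Dd (a * b) = Dd a * b + a * Dd b"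
  proof (rule fps_ext)
    fix j
    have "Dd (a * b) $ j = DN j (a * b) $ j" by (simp add: DN_nth)
    also have "\<dots> = (DN j a * b) $ j + (a * DN j b) $ j" by (simp add: der_mult[OF is_der_DN])
    also have "(DN j a * b) $ j = (Dd a * b) $ j" by (rule fps_mult_local_left) (simp add: DN_nth)
    also have "(a * DN j b) $ j = (a * Dd b) $ j" by (rule fps_mult_local_right) (simp add: DN_nth)
    finally show "Dd (a * b) $ j = (Dd a * b + a * Dd b) $ j" by simp
  qed
qed

lemma is_der_D1: "is_der D1"
proof (rule is_derI)
  fix a b :: V
  show "D1 (a + b) = D1 a + D1 b"
    by (simp add: fps_eq_iff D1_def dn_add sum.distrib algebra_simps)
  show "D1 (a * b) = D1 a * b + a * D1 b"
  proof (rule fps_ext)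
    fix j
    have "D1 (a * b) $ j = D1N j (a * b) $ j" by (simp add: D1N_nth)
    also have "\<dots> = (D1N j a * b) $ j + (a * D1N j b) $ j" by (simp add: der_mult[OF is_der_D1N])
    also have "(D1N j a * b) $ j = (D1 a * b) $ j" by (rule fps_mult_local_left) (simp add: D1N_nth)
    also have "(a * D1N j b) $ j = (a * D1 b) $ j" by (rule fps_mult_local_right) (simp add: D1N_nth)
    finally show "D1 (a * b) $ j = (D1 a * b + a * D1 b) $ j" by simp
  qed
qed

lemma vb_Dd: assumes "vb m \<phi>" shows "vb (Suc m) (Dd \<phi>)"
  unfolding vb_def
proof (intro allI impI)
  fix i assume i: "i < Suc m"
  have "\<forall>n\<in>{1..i}. \<phi> $ (i - n) = 0" using assms i by (auto simp: vb_def)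
  then show "Dd \<phi> $ i = 0" unfolding Dd_def by (simp add: dn_zero)
qed
lemma vb_D1: assumes "vb m \<phi>" shows "vb (Suc m) (D1 \<phi>)"
  unfolding vb_def
proof (intro allI impI)
  fix i assume i: "i < Suc m"
  have "\<forall>n\<in>{1..i}. \<phi> $ (i - n) = 0" using assms i by (auto simp: vb_def)
  then show "D1 \<phi> $ i = 0" unfolding D1_def by (simp add: dn_zero)
qed
lemma vb_Dd_pow: assumes "vb m \<phi>" shows "vb (m + k) ((Dd ^^ k) \<phi>)"
proof (induction k)
  case 0 then show ?case using assms by simp
next
  case (Suc k) then show ?case using vb_Dd[OF Suc.IH] by simp
qed


unbundle fps_syntax

definition cf :: "nat \<Rightarrow> V" where "cf k = fps_const (rr (1 / fact k))"

lemma central_cf: "central (cf k)" by (simp add: cf_def central_fps_const central_rr)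
lemma cf_nth: "(cf k * \<phi>) $ j = rr (1 / fact k) * \<phi> $ j" by (simp add: cf_def)

definition Dl :: "V \<Rightarrow> V" where
  "Dl \<phi> = Abs_fps (\<lambda>j. \<Sum>k\<le>j. rr (1 / fact k) * (Dd ^^ k) \<phi> $ j)"
definition DlN :: "nat \<Rightarrow> V \<Rightarrow> V" where
  "DlN N \<phi> = (\<Sum>k\<le>N. cf k * (Dd ^^ k) \<phi>)"

lemma Dd_pow_vanish: "j < k \<Longrightarrow> (Dd ^^ k) \<phi> $ j = 0"
  using vb_Dd_pow[of 0 \<phi> k] vb_0[of \<phi>] by (simp add: vb_def)

lemma DlN_nth: assumes "j \<le> N" shows "DlN N \<phi> $ j = Dl \<phi> $ j"
proof -
  have "DlN N \<phi> $ j = (\<Sum>k\<le>N. rr (1 / fact k) * (Dd ^^ k) \<phi> $ j)"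
    by (simp add: DlN_def fps_sum_nth cf_nth)
  also have "\<dots> = (\<Sum>k\<le>j. rr (1 / fact k) * (Dd ^^ k) \<phi> $ j)"
    using assms by (intro sum.mono_neutral_right) (auto simp: Dd_pow_vanish)
  finally show ?thesis by (simp add: Dl_def)
qed

lemma Dl_add: "Dl (a + b) = Dl a + Dl b"
  by (simp add: Dl_def fps_eq_iff der_pow_add[OF is_der_Dd] distrib_left sum.distrib)
lemma Dl_zero: "Dl 0 = 0"
  by (simp add: Dl_def fps_eq_iff der_pow_zero[OF is_der_Dd])
lemma Dl_uminus: "Dl (- a) = - Dl a"
  using Dl_add[of a "- a"] Dl_zero minus_unique[of "Dl a" "Dl (- a)"] by simp
lemma Dl_diff: "Dl (a - b) = Dl a - Dl b"
  using Dl_add[of a "- b"] Dl_uminus[of b] by simp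
lemma Dl_sum: "Dl (sum f A) = (\<Sum>i\<in>A. Dl (f i))"
  by (induction A rule: infinite_finite_induct) (simp_all add: Dl_zero Dl_add)

lemma Dl_fix: assumes "Dd \<phi> = 0" shows "Dl \<phi> = \<phi>"
proof (rule fps_ext)
  fix j
  have z: "Dd ((Dd ^^ k) \<phi>) = 0" for k
    by (induction k) (simp_all add: assms der_zero[OF is_der_Dd])
  show "Dl \<phi> $ j = \<phi> $ j"
    unfolding Dl_def by (simp add: sum.atMost_shift z rr_one del: funpow.simps) (simp add: z)
qed

lemma coef_identity:
  assumes "a \<le> k"
  shows "rr (1 / fact k) * of_nat (k choose a) = rr (1 / fact a) * rr (1 / fact (k - a))"
proof -
  have "(1 / fact k) * (of_nat (k choose a) :: rat) = (1 / fact a) * (1 / fact (k - a))"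
    using assms by (simp add: binomial_fact field_simps)
  then show ?thesis by (simp add: of_nat_sc rr_mult)
qed

lemma Dl_mult: "Dl (\<phi> * \<psi>) = Dl \<phi> * Dl \<psi>"
proof (rule fps_ext)
  fix N
  define G where "G a b = cf a * cf b * ((Dd ^^ a) \<phi> * (Dd ^^ b) \<psi>)" for a b
  have vbG: "G a b $ j = 0" if "j < a + b" for a b j
  proof -
    have "vb (a + b) ((Dd ^^ a) \<phi> * (Dd ^^ b) \<psi>)"
      using vb_mult[OF vb_Dd_pow[OF vb_0] vb_Dd_pow[OF vb_0]] by simp
    then show ?thesis using that by (simp add: G_def cf_def vb_def mult.assoc)
  qed
  have "DlN N (\<phi> * \<psi>) = (\<Sum>k\<le>N. \<Sum>a\<le>k. cf k * (of_nat (k choose a) * ((Dd ^^ a) \<phi> * (Dd ^^ (k - a)) \<psi>)))"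
    by (simp add: DlN_def leibniz[OF is_der_Dd] sum_distrib_left)
  also have "\<dots> = (\<Sum>k\<le>N. \<Sum>a\<le>k. G a (k - a))"
  proof (intro sum.cong refl)
    fix k a :: nat assume "a \<in> {..k}"
    then have "rr (1 / fact k) * of_nat (k choose a) = rr (1 / fact a) * rr (1 / fact (k - a))"
      by (simp add: coef_identity)
    then have "cf k * of_nat (k choose a) = cf a * cf (k - a)"
      by (simp add: cf_def flip: fps_of_nat)
    then show "cf k * (of_nat (k choose a) * ((Dd ^^ a) \<phi> * (Dd ^^ (k - a)) \<psi>)) = G a (k - a)"
      by (simp add: G_def mult.assoc[symmetric])
  qed
  also have "\<dots> = (\<Sum>(a, b)\<in>{(a, b). a + b \<le> N}. G a b)"
    by (rule sum.triangle_reindex_eq[symmetric])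
  finally have L: "DlN N (\<phi> * \<psi>) = (\<Sum>(a, b)\<in>{(a, b). a + b \<le> N}. G a b)" .
  have "DlN N \<phi> * DlN N \<psi> = (\<Sum>a\<le>N. \<Sum>b\<le>N. cf a * (Dd ^^ a) \<phi> * (cf b * (Dd ^^ b) \<psi>))"
    by (simp add: DlN_def sum_product)
  also have "\<dots> = (\<Sum>a\<le>N. \<Sum>b\<le>N. G a b)"
  proof (intro sum.cong refl)
    fix a b
    have "(Dd ^^ a) \<phi> * cf b = cf b * (Dd ^^ a) \<phi>" using centralD[OF central_cf] by metis
    then show "cf a * (Dd ^^ a) \<phi> * (cf b * (Dd ^^ b) \<psi>) = G a b"
      by (simp add: G_def mult.assoc) (simp add: mult.assoc[symmetric])
  qed
  also have "\<dots> = (\<Sum>(a, b)\<in>{..N} \<times> {..N}. G a b)"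
    by (simp add: sum.cartesian_product)
  finally have R: "DlN N \<phi> * DlN N \<psi> = (\<Sum>(a, b)\<in>{..N} \<times> {..N}. G a b)" .
  have "(\<Sum>(a, b)\<in>{..N} \<times> {..N}. G a b) $ N = (\<Sum>(a, b)\<in>{(a, b). a + b \<le> N}. G a b) $ N"
  proof -
    have "(\<Sum>(a, b)\<in>{..N} \<times> {..N}. G a b $ N) = (\<Sum>(a, b)\<in>{(a, b). a + b \<le> N}. G a b $ N)"
    proof (rule sum.mono_neutral_right)
      show "finite ({..N} \<times> {..N})" by simp
      show "{(a, b). a + b \<le> N} \<subseteq> {..N} \<times> {..N}" by auto
      show "\<forall>i\<in>{..N} \<times> {..N} - {(a, b). a + b \<le> N}. (case i of (a, b) \<Rightarrow> G a b $ N) = 0"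
        by (auto intro!: vbG)
    qed
    then show ?thesis by (simp add: fps_sum_nth case_prod_beta)
  qed
  then have "DlN N (\<phi> * \<psi>) $ N = (DlN N \<phi> * DlN N \<psi>) $ N" by (simp add: L R)
  also have "\<dots> = (Dl \<phi> * DlN N \<psi>) $ N" by (rule fps_mult_local_left) (simp add: DlN_nth)
  also have "\<dots> = (Dl \<phi> * Dl \<psi>) $ N" by (rule fps_mult_local_right) (simp add: DlN_nth)
  finally show "Dl (\<phi> * \<psi>) $ N = (Dl \<phi> * Dl \<psi>) $ N" by (simp add: DlN_nth)
qed

lemma Dd_one: "Dd 1 = 0"
  by (rule fps_ext) (simp add: Dd_def, intro sum.neutral ballI, simp add: dn_one dn_zero)
lemma Dl_one: "Dl 1 = 1" by (rule Dl_fix[OF Dd_one])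
lemma Dd_X: "Dd fps_X = 0"
  by (rule fps_ext) (simp add: Dd_def fps_X_def, intro sum.neutral ballI, simp add: dn_one dn_zero)
lemma Dl_X: "Dl fps_X = fps_X" by (rule Dl_fix[OF Dd_X])
lemma Dd_const: "(\<And>n. dn n a = 0) \<Longrightarrow> Dd (fps_const a) = 0"
  by (rule fps_ext) (auto simp: Dd_def dn_zero intro!: sum.neutral)


unbundle fps_syntax

lemma rr_add: "rr p + rr q = rr (p + q)" by (simp add: rr_def sc_add)

lemma nc_of_nat_cancel:
  assumes "of_nat j * a = (of_nat j * b :: nc)" "j > 0" shows "a = b"
proof (rule Rep_nc_eqI)
  fix w
  have "Rep_nc (sc (of_nat j) * a) w = Rep_nc (sc (of_nat j) * b) w"
    using assms(1) by (simp add: sc_of_nat)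
  then have "of_nat j * Rep_nc a w = of_nat j * Rep_nc b w" by (simp add: Rep_sc_mult)
  then show "Rep_nc a w = Rep_nc b w" using assms(2) by simp
qed

definition Eu :: "V \<Rightarrow> V" where "Eu \<phi> = Abs_fps (\<lambda>j. of_nat j * \<phi> $ j)"

lemma Ex_nth: "Eu \<phi> $ j = of_nat j * \<phi> $ j" by (simp add: Eu_def)

lemma dn_of_nat_mult: "dn n (of_nat k * a) = of_nat k * dn n a"
  by (rule der_of_nat_mult[OF is_der_dn])

lemma Ex_Dd: "Eu (Dd \<phi>) = Dd (Eu \<phi>) + D1 \<phi>"
proof (rule fps_ext)
  fix j
  have "Eu (Dd \<phi>) $ j = (\<Sum>n\<in>{1..j}. of_nat j * (rr (1 / of_nat n) * dn n (\<phi> $ (j - n))))"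
    by (simp add: Ex_nth Dd_def sum_distrib_left)
  also have "\<dots> = (\<Sum>n\<in>{1..j}. rr (1 / of_nat n) * dn n (of_nat (j - n) * \<phi> $ (j - n)) + dn n (\<phi> $ (j - n)))"
  proof (intro sum.cong refl)
    fix n assume n: "n \<in> {1..j}"
    define d where "d = dn n (\<phi> $ (j - n))"
    have q: "rat_of_nat j * (1 / of_nat n) = 1 / of_nat n * of_nat (j - n) + 1"
      using n by (simp add: of_nat_diff field_simps)
    have "of_nat j * (rr (1 / of_nat n) * d) = rr (of_nat j * (1 / of_nat n)) * d"
      by (simp add: of_nat_sc mult.assoc[symmetric] rr_mult)
    also have "\<dots> = rr (1 / of_nat n) * (of_nat (j - n) * d) + d"
      by (simp only: q of_nat_sc mult.assoc[symmetric] rr_mult flip: rr_add) (simp add: rr_one distrib_right)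
    finally show "of_nat j * (rr (1 / of_nat n) * dn n (\<phi> $ (j - n))) =
        rr (1 / of_nat n) * dn n (of_nat (j - n) * \<phi> $ (j - n)) + dn n (\<phi> $ (j - n))"
      by (simp add: d_def dn_of_nat_mult)
  qed
  also have "\<dots> = (Dd (Eu \<phi>) + D1 \<phi>) $ j"
    by (simp add: Dd_def D1_def Ex_nth sum.distrib)
  finally show "Eu (Dd \<phi>) $ j = (Dd (Eu \<phi>) + D1 \<phi>) $ j" .
qed

lemma Vmap_dn_sum: "Vmap (dn n) (sum f A) = (\<Sum>i\<in>A. Vmap (dn n) (f i))"
  by (rule der_sum[OF is_der_Vmap[OF is_der_dn]])

lemma Vmap_dn_scale: "Vmap (dn n) (fps_const (rr q) * fps_X ^ m * \<psi>) = fps_const (rr q) * fps_X ^ m * Vmap (dn n) \<psi>"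
  by (rule fps_ext) (simp add: mult.assoc fps_X_power_mult_nth rr_def dn_sc_mult dn_zero)
lemma Vmap_dn_X: "Vmap (dn n) (fps_X ^ m * \<psi>) = fps_X ^ m * Vmap (dn n) \<psi>"
  by (rule fps_ext) (simp add: fps_X_power_mult_nth dn_zero)
lemma Vmap_dn_comm: "Vmap (dn n) (Vmap (dn m) \<psi>) = Vmap (dn m) (Vmap (dn n) \<psi>)"
  by (rule fps_ext) (simp add: dn_comm)

lemma D1N_DN: "D1N N (DN N \<phi>) = DN N (D1N N \<phi>)"
proof -
  have "D1N N (DN N \<phi>) = (\<Sum>n\<in>{1..N}. \<Sum>m\<in>{1..N}. fps_X ^ n * (fps_const (rr (1 / of_nat m)) * fps_X ^ m * Vmap (dn n) (Vmap (dn m) \<phi>)))"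
    by (simp add: D1N_def DN_def Vmap_dn_sum Vmap_dn_scale sum_distrib_left)
  also have "\<dots> = (\<Sum>m\<in>{1..N}. \<Sum>n\<in>{1..N}. fps_const (rr (1 / of_nat m)) * fps_X ^ m * (fps_X ^ n * Vmap (dn m) (Vmap (dn n) \<phi>)))"
  proof (subst sum.swap, intro sum.cong refl)
    fix m n
    have c1: "central (fps_X ^ n :: V)" by (intro central_pow central_fps_X)
    show "fps_X ^ n * (fps_const (rr (1 / of_nat m)) * fps_X ^ m * Vmap (dn n) (Vmap (dn m) \<phi>)) =
      fps_const (rr (1 / of_nat m)) * fps_X ^ m * (fps_X ^ n * Vmap (dn m) (Vmap (dn n) \<phi>))"
      by (simp add: Vmap_dn_comm mult.assoc centralD[OF c1] flip: mult.assoc[of "fps_X ^ n"]) 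
  qed
  also have "\<dots> = DN N (D1N N \<phi>)"
    by (simp add: D1N_def DN_def Vmap_dn_sum Vmap_dn_X sum_distrib_left mult.assoc)
  finally show ?thesis .
qed

lemma D1_Dd: "D1 (Dd \<phi>) = Dd (D1 \<phi>)"
proof (rule fps_ext)
  fix j
  have "D1 (Dd \<phi>) $ j = D1 (DN j \<phi>) $ j" by (rule D1_local) (simp add: DN_nth)
  also have "\<dots> = D1N j (DN j \<phi>) $ j" by (simp add: D1N_nth)
  also have "\<dots> = DN j (D1N j \<phi>) $ j" by (simp add: D1N_DN)
  also have "\<dots> = Dd (D1N j \<phi>) $ j" by (simp add: DN_nth)
  also have "\<dots> = Dd (D1 \<phi>) $ j" by (rule Dd_local) (simp add: D1N_nth)
  finally show "D1 (Dd \<phi>) $ j = Dd (D1 \<phi>) $ j" .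
qed

lemma D1_Dd_pow: "D1 ((Dd ^^ k) \<phi>) = (Dd ^^ k) (D1 \<phi>)"
  by (induction k) (simp_all add: D1_Dd)

lemma Ex_add: "Eu (a + b) = Eu a + Eu b" by (rule fps_ext) (simp add: Ex_nth distrib_left)
lemma Ex_zero: "Eu 0 = 0" by (rule fps_ext) (simp add: Ex_nth)

lemma Ex_Dd_pow:
  assumes "Eu \<phi> = 0"
  shows "Eu ((Dd ^^ Suc k) \<phi>) = of_nat (Suc k) * (Dd ^^ k) (D1 \<phi>)"
proof (induction k)
  case 0 then show ?case by (simp add: Ex_Dd assms der_zero[OF is_der_Dd])
next
  case (Suc k)
  have "Eu ((Dd ^^ Suc (Suc k)) \<phi>) = Dd (Eu ((Dd ^^ Suc k) \<phi>)) + D1 ((Dd ^^ Suc k) \<phi>)"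
  proof -
    have eq: "(Dd ^^ Suc (Suc k)) \<phi> = Dd ((Dd ^^ Suc k) \<phi>)" by simp
    show ?thesis by (simp only: eq Ex_Dd)
  qed
  also have "\<dots> = of_nat (Suc k) * (Dd ^^ Suc k) (D1 \<phi>) + (Dd ^^ Suc k) (D1 \<phi>)"
    by (simp only: Suc.IH der_of_nat_mult[OF is_der_Dd] D1_Dd_pow) simp
  also have "\<dots> = of_nat (Suc (Suc k)) * (Dd ^^ Suc k) (D1 \<phi>)"
    by (simp add: distrib_right)
  finally show ?case .
qed

lemma V_of_nat_nth: "((of_nat m :: V) * \<psi>) $ j = of_nat m * \<psi> $ j"
  by (simp flip: fps_of_nat)

lemma rat_fact_Suc: "(1::rat) / fact (Suc k) * of_nat (Suc k) = 1 / fact k"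
proof -
  have "fact (Suc k) = of_nat (Suc k) * (fact k::rat)" by simp
  moreover have "of_nat (Suc k) \<noteq> (0::rat)" by simp
  moreover have "(fact k::rat) \<noteq> 0" by simp
  moreover have "0 < fact k + fact k * (of_nat k::rat)" by (simp add: add_pos_nonneg)
  ultimately show ?thesis by (simp add: field_simps)
qed
lemma rr_fact_Suc: "rr (1 / fact (Suc k)) * of_nat (Suc k) = rr (1 / fact k)"
  by (simp only: of_nat_sc rr_mult rat_fact_Suc)
lemma of_nat_rr_comm: "of_nat j * (rr c * x) = rr c * (of_nat j * x)"
  by (simp add: of_nat_sc mult.assoc[symmetric] rr_mult mult.commute)

lemma Ex_Dl:
  assumes "Eu \<phi> = 0"
  shows "Eu (Dl \<phi>) = Dl (D1 \<phi>)"
proof (rule fps_ext)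
  fix j
  have "Eu (Dl \<phi>) $ j = of_nat j * (\<Sum>k\<le>j. rr (1 / fact k) * (Dd ^^ k) \<phi> $ j)"
    by (simp add: Ex_nth Dl_def)
  also have "\<dots> = (\<Sum>k\<le>j. of_nat j * (rr (1 / fact k) * (Dd ^^ k) \<phi> $ j))"
    by (rule sum_distrib_left)
  also have "\<dots> = (\<Sum>k\<le>j. rr (1 / fact k) * Eu ((Dd ^^ k) \<phi>) $ j)"
    by (simp only: of_nat_rr_comm Ex_nth)
  also have "\<dots> = rr 1 * Eu \<phi> $ j + (\<Sum>k<j. rr (1 / fact (Suc k)) * Eu ((Dd ^^ Suc k) \<phi>) $ j)"
    by (simp only: sum.atMost_shift) simp
  also have "\<dots> = (\<Sum>k<j. rr (1 / fact (Suc k)) * Eu ((Dd ^^ Suc k) \<phi>) $ j)"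
    by (simp add: assms)
  also have "\<dots> = (\<Sum>k<j. rr (1 / fact k) * (Dd ^^ k) (D1 \<phi>) $ j)"
  proof (intro sum.cong refl)
    fix k
    have "Eu ((Dd ^^ Suc k) \<phi>) $ j = of_nat (Suc k) * (Dd ^^ k) (D1 \<phi>) $ j"
      by (simp only: Ex_Dd_pow[OF assms] V_of_nat_nth)
    then show "rr (1 / fact (Suc k)) * Eu ((Dd ^^ Suc k) \<phi>) $ j = rr (1 / fact k) * (Dd ^^ k) (D1 \<phi>) $ j"
      by (simp only: mult.assoc[symmetric] rr_fact_Suc)
  qed
  also have "\<dots> = (\<Sum>k<Suc j. rr (1 / fact k) * (Dd ^^ k) (D1 \<phi>) $ j)"
  proof -
    have "vb 1 (D1 \<phi>)" using vb_D1[OF vb_0] by simp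
    then have "(Dd ^^ j) (D1 \<phi>) $ j = 0" using vb_Dd_pow[of 1 "D1 \<phi>" j] by (simp add: vb_def)
    then show ?thesis by simp
  qed
  also have "\<dots> = Dl (D1 \<phi>) $ j" by (simp add: Dl_def lessThan_Suc_atMost)
  finally show "Eu (Dl \<phi>) $ j = Dl (D1 \<phi>) $ j" .
qed


unbundle fps_syntax

definition Gs :: "'a::ring_1 \<Rightarrow> 'a fps" where "Gs a = Abs_fps (\<lambda>m. a ^ m)"

lemma Gs_nth: "Gs a $ m = a ^ m" by (simp add: Gs_def)

lemma Gs_inv_left: "(1 - fps_X * fps_const a) * Gs a = 1"
proof (rule fps_ext)
  fix m
  show "((1 - fps_X * fps_const a) * Gs a) $ m = (1 :: 'a fps) $ m"
    by (cases m) (simp_all add: algebra_simps Gs_nth mult.assoc)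
qed
lemma Gs_inv_right: "Gs a * (1 - fps_X * fps_const a) = 1"
proof (rule fps_ext)
  fix m
  have "Gs a * (1 - fps_X * fps_const a) = Gs a - Gs a * fps_X * fps_const a"
    by (simp add: algebra_simps)
  then show "(Gs a * (1 - fps_X * fps_const a)) $ m = (1 :: 'a fps) $ m"
    by (cases m) (simp_all add: Gs_nth power_Suc2 del: power_Suc)
qed

definition cx :: V where "cx = fps_const xn"
definition cy :: V where "cy = fps_const yn"
definition cz :: V where "cz = fps_const zn"
definition Zs :: V where "Zs = Gs zn"
definition Ps :: V where "Ps = Gs yn"
definition Psi :: V where "Psi = Dl cx"

lemma cz_eq: "cz = cx + cy" by (simp add: cz_def cx_def cy_def zn_def)

lemma Ex_const: "Eu (fps_const a) = 0"
  by (rule fps_ext) (simp add: Ex_nth)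

lemma D1_cx: "D1 cx = fps_X * (cx * (Zs * cy))"
proof (rule fps_ext)
  fix j
  show "D1 cx $ j = (fps_X * (cx * (Zs * cy))) $ j"
  proof (cases j)
    case 0 then show ?thesis by (simp add: D1_def)
  next
    case (Suc i)
    have "D1 cx $ j = (\<Sum>n\<in>{1..j}. dn n (fps_const xn $ (j - n)))"
      by (simp add: D1_def cx_def)
    also have "\<dots> = (\<Sum>n\<in>{1..j}. if n = j then dn n xn else 0)"
      by (intro sum.cong refl) (auto simp: dn_zero)
    also have "\<dots> = dn j xn" using Suc by simp
    also have "\<dots> = xn * (zn ^ i * yn)" by (simp add: dn_xn AA_def Suc)
    finally show ?thesis by (simp add: Suc cx_def cy_def Zs_def Gs_nth)
  qed
qed

lemma Dd_Zs: "Dd Zs = 0"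
  by (rule fps_ext) (simp add: Dd_def Zs_def Gs_nth dn_zn_pow)
lemma Dl_Zs: "Dl Zs = Zs" by (rule Dl_fix[OF Dd_Zs])
lemma Dl_cz: "Dl cz = cz" unfolding cz_def by (rule Dl_fix, rule Dd_const) (rule dn_zn)
lemma Dl_cy: "Dl cy = cz - Psi"
proof -
  have "Dl cy = Dl (cz - cx)" by (simp add: cz_eq)
  also have "\<dots> = cz - Psi" by (simp add: Dl_diff Dl_cz Psi_def)
  finally show ?thesis .
qed

lemma Ex_Psi: "Eu Psi = fps_X * (Psi * (Zs * (cz - Psi)))"
proof -
  have "Eu Psi = Dl (D1 cx)" unfolding Psi_def cx_def by (rule Ex_Dl) (rule Ex_const)
  also have "\<dots> = Dl fps_X * (Dl cx * (Dl Zs * Dl cy))" by (simp add: D1_cx Dl_mult)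
  also have "\<dots> = fps_X * (Psi * (Zs * (cz - Psi)))" by (simp add: Dl_X Dl_Zs Dl_cy Psi_def)
  finally show ?thesis .
qed

lemma Ex_left_const: "Eu (fps_const a * \<phi>) = fps_const a * Eu \<phi>"
proof (rule fps_ext)
  fix n
  have "of_nat n * (a * \<phi> $ n) = a * (of_nat n * \<phi> $ n)"
    by (simp add: mult.assoc[symmetric] mult_of_nat_commute[of n a])
  then show "Eu (fps_const a * \<phi>) $ n = (fps_const a * Eu \<phi>) $ n" by (simp add: Ex_nth)
qed

lemma Ex_Ps: "Eu Ps = fps_X * (Ps * (cy * Ps))"
proof (rule fps_ext)
  fix m
  show "Eu Ps $ m = (fps_X * (Ps * (cy * Ps))) $ m"
  proof (cases m)
    case 0 then show ?thesis by (simp add: Ex_nth)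
  next
    case (Suc i)
    have "(Ps * (cy * Ps)) $ i = (\<Sum>a=0..i. Ps $ a * (cy * Ps) $ (i - a))"
      by (rule fps_mult_nth)
    also have "\<dots> = (\<Sum>a=0..i. yn ^ a * (yn * yn ^ (i - a)))"
      by (simp add: Ps_def Gs_nth cy_def)
    also have "\<dots> = (\<Sum>a=0..i. yn ^ Suc i)"
    proof (intro sum.cong refl)
      fix a assume "a \<in> {0..i}"
      have "yn ^ a * (yn * yn ^ (i - a)) = yn ^ (a + Suc (i - a))"
        by (simp only: power_add power_Suc)
      also have "a + Suc (i - a) = Suc i" using \<open>a \<in> {0..i}\<close> by simp
      finally show "yn ^ a * (yn * yn ^ (i - a)) = yn ^ Suc i" .
    qed
    also have "\<dots> = of_nat (Suc i) * yn ^ Suc i" by simp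
    finally show ?thesis by (simp add: Suc Ex_nth Ps_def Gs_nth)
  qed
qed

lemma X_central: "fps_X * a = a * (fps_X :: V)" by (rule fps_mult_fps_X_commute)

lemma key_V: "cz - cx * Ps = (1 - fps_X * cz) * (cy * Ps)"
proof -
  have P1: "(1 - fps_X * cy) * Ps = 1" unfolding Ps_def cy_def by (rule Gs_inv_left)
  have "cz = cz * ((1 - fps_X * cy) * Ps)" by (simp add: P1)
  then have "cz - cx * Ps = cz * ((1 - fps_X * cy) * Ps) - cx * Ps" by simp
  also have "\<dots> = (cz * (1 - fps_X * cy) - cx) * Ps"
    by (simp add: algebra_simps)
  also have "cz * (1 - fps_X * cy) - cx = (1 - fps_X * cz) * cy"
    by (simp add: cz_eq algebra_simps X_central[of cx] X_central[of cy])
  finally show ?thesis by (simp add: mult.assoc)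
qed

lemma Ex_cand: "Eu (cx * Ps) = fps_X * ((cx * Ps) * (Zs * (cz - cx * Ps)))"
proof -
  have Z1: "Zs * (1 - fps_X * cz) = 1" unfolding Zs_def cz_def by (rule Gs_inv_right)
  have "Zs * (cz - cx * Ps) = cy * Ps"
    by (simp add: key_V mult.assoc[symmetric] Z1)
  have "Eu (cx * Ps) = cx * Eu Ps" by (simp add: cx_def Ex_left_const)
  also have "\<dots> = cx * (fps_X * (Ps * (cy * Ps)))" by (simp add: Ex_Ps)
  also have "\<dots> = fps_X * ((cx * Ps) * (cy * Ps))"
    by (simp add: mult.assoc[symmetric] X_central[of cx])
  finally show ?thesis using \<open>Zs * (cz - cx * Ps) = cy * Ps\<close> by simp
qed

lemma Psi_eq: "Psi = cx * Ps"
proof -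
  have "Psi $ j = (cx * Ps) $ j" for j
  proof (induction j rule: less_induct)
    case (less j)
    show ?case
    proof (cases j)
      case 0
      have "Psi $ 0 = xn" by (simp add: Psi_def Dl_def rr_one cx_def)
      then show ?thesis by (simp add: 0 cx_def Ps_def Gs_nth)
    next
      case (Suc i)
      have agree: "\<And>k. k \<le> i \<Longrightarrow> Psi $ k = (cx * Ps) $ k" using less Suc by simp
      have "of_nat j * Psi $ j = (Psi * (Zs * (cz - Psi))) $ i"
        using arg_cong[OF Ex_Psi, of "\<lambda>f. f $ j"] by (simp add: Ex_nth Suc)
      also have "\<dots> = ((cx * Ps) * (Zs * (cz - Psi))) $ i"
        by (rule fps_mult_local_left) (rule agree)
      also have "\<dots> = ((cx * Ps) * (Zs * (cz - cx * Ps))) $ i"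
        by (rule fps_mult_local_right, rule fps_mult_local_right) (simp add: agree)
      also have "\<dots> = of_nat j * (cx * Ps) $ j"
        using arg_cong[OF Ex_cand, of "\<lambda>f. f $ j"] by (simp add: Ex_nth Suc)
      finally show ?thesis by (rule nc_of_nat_cancel) (simp add: Suc)
    qed
  qed
  then show ?thesis by (simp add: fps_eq_iff)
qed


lemma cr:
  fixes c :: "'a::ring_1"
  assumes "\<And>r. c * r = r * c"
  shows "a * c = c * a" "a * (c * w) = c * (a * w)"
proof -
  show ac: "a * c = c * a" using assms[of a] by simp
  show "a * (c * w) = c * (a * w)" by (simp add: mult.assoc[symmetric] ac)
qed

lemma alg_a:
  fixes x y t v P I2 Q :: "'a::ring_1"
  assumes P: "(1 - v * y) * P = 1" and I2: "(1 - v * (t * (x * P))) * I2 = 1"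
    and Q: "Q * (1 - v * (t * x + y)) = 1"
  shows "P * I2 = Q"
proof -
  have "(1 - v * (t * x + y)) * P = (1 - v * y) * P - v * (t * (x * P))"
    by (simp add: algebra_simps)
  also have "\<dots> = 1 - v * (t * (x * P))" using P by simp
  finally have e: "(1 - v * (t * x + y)) * (P * I2) = 1"
    using I2 by (metis mult.assoc)
  have "Q = Q * ((1 - v * (t * x + y)) * (P * I2))" by (simp add: e)
  also have "\<dots> = P * I2" by (simp add: mult.assoc[symmetric] Q)
  finally show ?thesis by simp
qed

lemma alg_c:
  fixes x y v P :: "'a::ring_1"
  assumes cv: "\<And>r. v * r = r * v" and P: "(1 - v * y) * P = 1"
  shows "(x + y) - x * P = (1 - v * (x + y)) * (y * P)"
proof -
  have "((x + y) * (1 - v * y) - x) * P = (x + y) * ((1 - v * y) * P) - x * P"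
    by (simp add: algebra_simps)
  then have e: "(x + y) - x * P = ((x + y) * (1 - v * y) - x) * P" using P by simp
  have "(x + y) * (1 - v * y) - x = (1 - v * (x + y)) * y"
    by (simp add: algebra_simps cr[OF cv, of x] cr[OF cv, of y])
  then show ?thesis using e by (simp add: mult.assoc)
qed

lemma alg_b:
  fixes x y u v P U Z I1 :: "'a::ring_1"
  assumes cu: "\<And>r. u * r = r * u" and cv: "\<And>r. v * r = r * v"
    and P: "P * (1 - v * y) = 1" and U: "(1 - u * x) * U = 1" and Z: "(1 - v * (x + y)) * Z = 1"
    and I1: "I1 * (1 - (u * (x * P) + v * (x * P) - u * (v * (x * P * (x + y))))) = 1"
  shows "I1 * x = x * (U * (Z * (1 - v * y)))"
proof -
  define M where "M = U * (Z * (1 - v * y))"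
  define W where "W = u * (x * P) + v * (x * P) - u * (v * (x * P * (x + y)))"
  note C = cr[OF cu, of x] cr[OF cu, of y] cr[OF cu, of P] cr[OF cv, of x] cr[OF cv, of y] cr[OF cv, of P] cr[OF cv, of u]
  have id: "(1 - v * y) - (1 - v * (x + y)) * (1 - u * x) = u * x + v * x - u * (v * ((x + y) * x))"
    by (simp add: algebra_simps C)
  have Wx: "W * x = x * (P * ((1 - v * y) - (1 - v * (x + y)) * (1 - u * x)))"
    unfolding id W_def by (simp add: algebra_simps C)
  have zm: "(1 - v * (x + y)) * ((1 - u * x) * M) = 1 - v * y"
    unfolding M_def by (simp add: mult.assoc[symmetric] U) (simp add: mult.assoc Z[unfolded mult.assoc[symmetric]] flip: mult.assoc)
  have "W * x * M = x * (P * (((1 - v * y) - (1 - v * (x + y)) * (1 - u * x)) * M))"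
    by (simp add: Wx mult.assoc)
  also have "((1 - v * y) - (1 - v * (x + y)) * (1 - u * x)) * M = (1 - v * y) * M - (1 - v * (x + y)) * ((1 - u * x) * M)"
    by (simp add: left_diff_distrib mult.assoc)
  also have "\<dots> = (1 - v * y) * M - (1 - v * y)" by (simp only: zm)
  also have "x * (P * ((1 - v * y) * M - (1 - v * y))) = x * M - x"
  proof -
    have "P * ((1 - v * y) * M - (1 - v * y)) = (P * (1 - v * y)) * M - P * (1 - v * y)"
      by (metis mult.assoc right_diff_distrib)
    also have "\<dots> = M - 1" by (simp add: P)
    finally show ?thesis by (simp add: right_diff_distrib)
  qed
  finally have "(1 - W) * (x * M) = x" by (simp add: algebra_simps mult.assoc)
  then have "I1 * x = I1 * ((1 - W) * (x * M))" by simp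
  also have "\<dots> = x * M" using I1 by (simp add: mult.assoc[symmetric] W_def)
  finally show ?thesis by (simp add: M_def)
qed

lemma alg_K:
  fixes x y t v Q B :: "'a::ring_1"
  assumes cv: "\<And>r. v * r = r * v" and ct: "\<And>r. t * r = r * t"
    and hB: "B = 1 - v * (t * x + y)" and QB: "Q * B = 1" and BQ: "B * Q = 1"
  shows "(1 - v * y) * (Q * ((1 - v * (x + y)) * y)) = (1 - v * (x + y)) * (Q * (y * (1 - v * y)))"
proof -
  note C = cr[OF cv, of x] cr[OF cv, of y] cr[OF cv, of Q] cr[OF cv, of B] cr[OF cv, of t]
     cr[OF ct, of x] cr[OF ct, of y] cr[OF ct, of Q] cr[OF ct, of B]
  have QBw: "Q * (B * w) = w" for w by (simp add: mult.assoc[symmetric] QB)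
  have BQw: "B * (Q * w) = w" for w by (simp add: mult.assoc[symmetric] BQ)
  have h1: "1 - v * y = B + v * (t * x)" by (simp add: hB algebra_simps)
  have h2: "1 - v * (x + y) = B - v * x + v * (t * x)" by (simp add: hB algebra_simps)
  have hc: "y * B = B * y + v * (t * (x * y)) - v * (t * (y * x))"
    by (simp add: hB algebra_simps C)
  have hcw: "Q * (y * B) = y + v * (t * (Q * (x * y))) - v * (t * (Q * (y * x)))"
    by (simp add: hc algebra_simps C QBw)
  have L: "(1 - v * y) * (Q * ((1 - v * (x + y)) * y)) =
     B * y - v * (x * y) + v * (t * (x * y)) + v * (t * (x * y))
     - v * (v * (t * (x * (Q * (x * y))))) + v * (v * (t * (t * (x * (Q * (x * y))))))"
    unfolding h1 h2 by (simp add: algebra_simps C QBw BQw)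
  have R: "(1 - v * (x + y)) * (Q * (y * (1 - v * y))) =
     B * y - v * (x * y) + v * (t * (x * y)) + v * (t * (x * y))
     - v * (v * (t * (x * (Q * (x * y))))) + v * (v * (t * (t * (x * (Q * (x * y))))))"
    unfolding h1 h2 by (simp add: algebra_simps C QBw BQw hc hcw)
  show ?thesis using L R by simp
qed

lemma final_alg:
  fixes x y t u v P Z I1 I2 U Q :: "'a::ring_1"
  assumes cu: "\<And>r. u * r = r * u" and cv: "\<And>r. v * r = r * v" and ct: "\<And>r. t * r = r * t"
    and P1: "P * (1 - v * y) = 1" and P2: "(1 - v * y) * P = 1"
    and Z1: "Z * (1 - v * (x + y)) = 1" and Z2: "(1 - v * (x + y)) * Z = 1"
    and I1: "I1 * (1 - (u * (x * P) + v * (x * P) - u * (v * (x * P * (x + y))))) = 1"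
    and I2: "(1 - v * (t * (x * P))) * I2 = 1"
    and U: "(1 - u * x) * U = 1"
    and Q1: "Q * (1 - v * (t * x + y)) = 1" and Q2: "(1 - v * (t * x + y)) * Q = 1"
  shows "I1 * (x * P) * I2 * ((x + y) - x * P) = x * U * Q * y"
proof -
  have a: "P * I2 = Q" by (rule alg_a[OF P2 I2 Q1])
  have b: "I1 * x = x * (U * (Z * (1 - v * y)))" by (rule alg_b[OF cu cv P1 U Z2 I1])
  have c: "(x + y) - x * P = (1 - v * (x + y)) * (y * P)" by (rule alg_c[OF cv P2])
  have K: "(1 - v * y) * (Q * ((1 - v * (x + y)) * y)) = (1 - v * (x + y)) * (Q * (y * (1 - v * y)))"
    by (rule alg_K[OF cv ct refl Q1 Q2])
  have "I1 * (x * P) * I2 * ((x + y) - x * P) = (I1 * x) * (P * I2) * ((x + y) - x * P)"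
    by (simp add: mult.assoc)
  also have "\<dots> = x * U * Z * ((1 - v * y) * (Q * ((1 - v * (x + y)) * y))) * P"
    by (simp add: a b c mult.assoc)
  also have "\<dots> = x * U * (Z * (1 - v * (x + y))) * Q * y * ((1 - v * y) * P)"
    by (simp add: K mult.assoc)
  also have "\<dots> = x * U * Q * y" by (simp add: Z1 P2)
  finally show ?thesis .
qed


unbundle fps_syntax

type_synonym T = "nc fps fps"

definition is_hom :: "('a::ring_1 \<Rightarrow> 'b::ring_1) \<Rightarrow> bool" where
  "is_hom f \<longleftrightarrow> (\<forall>a b. f (a + b) = f a + f b) \<and> (\<forall>a b. f (a * b) = f a * f b) \<and> f 1 = 1"

context
  fixes f :: "'a::ring_1 \<Rightarrow> 'b::ring_1"
  assumes hf: "is_hom f"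
begin
lemma hom_add: "f (a + b) = f a + f b" using hf by (simp add: is_hom_def)
lemma hom_mult: "f (a * b) = f a * f b" using hf by (simp add: is_hom_def)
lemma hom_one: "f 1 = 1" using hf by (simp add: is_hom_def)
lemma hom_zero: "f 0 = 0" using hom_add[of 0 0] by simp
lemma hom_uminus: "f (- a) = - f a"
  using minus_unique[of "f a" "f (- a)"] hom_add[of a "- a"] hom_zero by simp
lemma hom_diff: "f (a - b) = f a - f b" using hom_add[of a "- b"] hom_uminus[of b] by simp
lemma hom_sum: "f (sum g A) = (\<Sum>i\<in>A. f (g i))"
  by (induction A rule: infinite_finite_induct) (simp_all add: hom_zero hom_add)
end

definition Tmap :: "(V \<Rightarrow> V) \<Rightarrow> T \<Rightarrow> T" where "Tmap g F = Abs_fps (\<lambda>i. g (F $ i))"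
lemma Tmap_nth[simp]: "Tmap g F $ i = g (F $ i)" by (simp add: Tmap_def)

lemma is_hom_Vmap:
  assumes "is_hom f" shows "is_hom (Vmap f)"
  unfolding is_hom_def
proof (intro conjI allI)
  fix a b :: V
  show "Vmap f (a + b) = Vmap f a + Vmap f b" by (rule fps_ext) (simp add: hom_add[OF assms])
  show "Vmap f (a * b) = Vmap f a * Vmap f b"
    by (rule fps_ext) (simp add: fps_mult_nth hom_sum[OF assms] hom_mult[OF assms])
  show "Vmap f 1 = 1" by (rule fps_ext) (simp add: hom_one[OF assms] hom_zero[OF assms])
qed

lemma is_hom_Tmap:
  assumes "is_hom g" shows "is_hom (Tmap g)"
  unfolding is_hom_def
proof (intro conjI allI)
  fix a b :: T
  show "Tmap g (a + b) = Tmap g a + Tmap g b" by (rule fps_ext) (simp add: hom_add[OF assms])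
  show "Tmap g (a * b) = Tmap g a * Tmap g b"
    by (rule fps_ext) (simp add: fps_mult_nth hom_sum[OF assms] hom_mult[OF assms])
  show "Tmap g 1 = 1" by (rule fps_ext) (simp add: hom_one[OF assms] hom_zero[OF assms])
qed

lemma is_hom_sgm: "is_hom (sgm c)" by (simp add: is_hom_def sgm_add sgm_mult sgm_one)
lemma is_hom_Dl: "is_hom Dl" by (simp add: is_hom_def Dl_add Dl_mult Dl_one)

lemma Tmap_const: "Tmap g (fps_const a) = fps_const (g a)" if "g 0 = 0"
  using that by (intro fps_ext) simp
lemma Tmap_X: "is_hom g \<Longrightarrow> Tmap g fps_X = fps_X"
  by (rule fps_ext) (simp add: hom_zero hom_one)
lemma Vmap_const: "f 0 = 0 \<Longrightarrow> Vmap f (fps_const a) = fps_const (f a)"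
  by (rule fps_ext) simp
lemma Vmap_X: "is_hom f \<Longrightarrow> Vmap f fps_X = fps_X"
  by (rule fps_ext) (simp add: hom_zero hom_one)

lemma hom_inv: "is_hom f \<Longrightarrow> a * b = 1 \<Longrightarrow> f a * f b = 1"
  by (metis hom_mult hom_one)

definition uT :: T where "uT = fps_X"
definition vT :: T where "vT = fps_const fps_X"
definition cT :: "nc \<Rightarrow> T" where "cT a = fps_const (fps_const a)"

lemma central_uT: "u * r = r * (u::T)" if "u = uT" for r using that by (simp add: uT_def fps_mult_fps_X_commute)
lemma central_vT: "vT * r = r * vT"
  by (rule centralD, unfold vT_def, rule central_fps_const, rule central_fps_X)
lemma central_cT: "central a \<Longrightarrow> cT a * r = r * cT a"
  by (rule centralD, unfold cT_def, intro central_fps_const)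

lemma cT_mult: "cT (a * b) = cT a * cT b" by (simp add: cT_def)
lemma cT_add: "cT (a + b) = cT a + cT b" by (simp add: cT_def)
lemma cT_diff: "cT (a - b) = cT a - cT b" by (simp add: cT_def)
lemma cT_one: "cT 1 = 1" by (simp add: cT_def)
lemma cT_nth: "cT a $ i $ j = (if i = 0 \<and> j = 0 then a else 0)" by (simp add: cT_def)

lemma Tmap_Vmap_cT: "is_hom f \<Longrightarrow> Tmap (Vmap f) (cT a) = cT (f a)"
  by (simp add: cT_def Tmap_const hom_zero is_hom_Vmap Vmap_const)
lemma Tmap_Vmap_uT: "is_hom f \<Longrightarrow> Tmap (Vmap f) uT = uT"
  by (simp add: uT_def Tmap_X is_hom_Vmap)
lemma Tmap_Vmap_vT: "is_hom f \<Longrightarrow> Tmap (Vmap f) vT = vT"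
  by (simp add: vT_def Tmap_const hom_zero is_hom_Vmap Vmap_X)
lemma Tmap_Dl_uT: "Tmap Dl uT = uT"
  by (simp add: uT_def Tmap_X is_hom_Dl)
lemma Tmap_Dl_vT: "Tmap Dl vT = vT"
  by (simp add: vT_def Tmap_const Dl_zero Dl_X)
lemma Tmap_Dl_cT: "Tmap Dl (cT a) = fps_const (Dl (fps_const a))"
  by (simp add: cT_def Tmap_const Dl_zero)

section \<open>vanishing of low total degree, geometric series\<close>

definition tb :: "nat \<Rightarrow> T \<Rightarrow> bool" where "tb d A \<longleftrightarrow> (\<forall>i j. i + j < d \<longrightarrow> A $ i $ j = 0)"

lemma T_mult_nth: "(A * B :: T) $ i $ j = (\<Sum>a=0..i. \<Sum>b=0..j. A $ a $ b * B $ (i - a) $ (j - b))"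
  by (simp add: fps_mult_nth fps_sum_nth)

lemma tb_mult: assumes "tb d1 A" "tb d2 B" shows "tb (d1 + d2) (A * B)"
  unfolding tb_def T_mult_nth
proof (intro allI impI sum.neutral ballI)
  fix i j a b assume ij: "i + j < d1 + d2" and a: "a \<in> {0..i}" and b: "b \<in> {0..j}"
  show "A $ a $ b * B $ (i - a) $ (j - b) = 0"
  proof (cases "a + b < d1")
    case True then show ?thesis using assms(1) by (simp add: tb_def)
  next
    case False then have "(i - a) + (j - b) < d2" using ij a b by auto
    then show ?thesis using assms(2) by (simp add: tb_def)
  qed
qed
lemma tb_0: "tb 0 A" by (simp add: tb_def)
lemma tb_pow: "tb 1 A \<Longrightarrow> tb n (A ^ n)"
proof (induction n)
  case 0 then show ?case by (simp add: tb_0)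
next
  case (Suc n) then show ?case using tb_mult[of 1 A n "A ^ n"] by simp
qed

lemma T_local_right:
  assumes "\<And>a b. a \<le> i \<Longrightarrow> b \<le> j \<Longrightarrow> S $ a $ b = S' $ a $ b"
  shows "(C * S :: T) $ i $ j = (C * S') $ i $ j"
  unfolding T_mult_nth using assms by (intro sum.cong refl) auto
lemma T_local_left:
  assumes "\<And>a b. a \<le> i \<Longrightarrow> b \<le> j \<Longrightarrow> S $ a $ b = S' $ a $ b"
  shows "(S * C :: T) $ i $ j = (S' * C) $ i $ j"
  unfolding T_mult_nth using assms by (intro sum.cong refl) auto

definition geoT :: "T \<Rightarrow> T" where
  "geoT A = Abs_fps (\<lambda>i. Abs_fps (\<lambda>j. \<Sum>n\<le>i + j. (A ^ n) $ i $ j))"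

lemma geoT_nth: "geoT A $ i $ j = (\<Sum>n\<le>i + j. (A ^ n) $ i $ j)" by (simp add: geoT_def)

lemma geo_trunc:
  assumes "tb 1 A" "i + j \<le> N"
  shows "geoT A $ i $ j = (\<Sum>n\<le>N. A ^ n) $ i $ j"
proof -
  have "(\<Sum>n\<le>N. A ^ n) $ i $ j = (\<Sum>n\<le>N. (A ^ n) $ i $ j)" by (simp add: fps_sum_nth)
  also have "\<dots> = (\<Sum>n\<le>i + j. (A ^ n) $ i $ j)"
  proof (rule sum.mono_neutral_right)
    show "\<forall>n\<in>{..N} - {..i + j}. (A ^ n) $ i $ j = 0"
      using tb_pow[OF assms(1)] by (auto simp: tb_def)
  qed (use assms in auto)
  finally show ?thesis by (simp add: geoT_nth)
qed

lemma tele_left: "(1 - A) * (\<Sum>n\<le>N. A ^ n) = 1 - (A::T) ^ Suc N"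
proof (induction N)
  case 0 then show ?case by (simp add: algebra_simps)
next
  case (Suc N)
  have "(1 - A) * (\<Sum>n\<le>Suc N. A ^ n) = (1 - A) * (\<Sum>n\<le>N. A ^ n) + (1 - A) * A ^ Suc N"
    by (simp add: distrib_left)
  also have "\<dots> = (1 - A ^ Suc N) + (A ^ Suc N - A ^ Suc (Suc N))"
    by (simp only: Suc.IH, simp add: left_diff_distrib)
  also have "\<dots> = 1 - A ^ Suc (Suc N)" by simp
  finally show ?case .
qed
lemma tele_right: "(\<Sum>n\<le>N. A ^ n) * (1 - A) = 1 - (A::T) ^ Suc N"
proof (induction N)
  case 0 then show ?case by (simp add: algebra_simps)
next
  case (Suc N)
  have "(\<Sum>n\<le>Suc N. A ^ n) * (1 - A) = (\<Sum>n\<le>N. A ^ n) * (1 - A) + A ^ Suc N * (1 - A)"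
    by (simp add: distrib_right)
  also have "\<dots> = (1 - A ^ Suc N) + (A ^ Suc N - A ^ Suc (Suc N))"
    by (simp only: Suc.IH, simp add: right_diff_distrib power_Suc2 del: power_Suc)
  also have "\<dots> = 1 - A ^ Suc (Suc N)" by simp
  finally show ?case .
qed

lemma geoT_inv:
  assumes "tb 1 A"
  shows "(1 - A) * geoT A = 1" "geoT A * (1 - A) = 1"
proof -
  show "(1 - A) * geoT A = 1"
  proof (rule fps_ext, rule fps_ext)
    fix i j
    have "((1 - A) * geoT A) $ i $ j = ((1 - A) * (\<Sum>n\<le>i + j. A ^ n)) $ i $ j"
      by (rule T_local_right) (rule geo_trunc[OF assms], simp)
    also have "\<dots> = (1 - A ^ Suc (i + j)) $ i $ j" by (simp only: tele_left)
    also have "\<dots> = (1::T) $ i $ j" using tb_pow[OF assms, of "Suc (i + j)"] by (simp add: tb_def)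
    finally show "((1 - A) * geoT A) $ i $ j = (1::T) $ i $ j" .
  qed
  show "geoT A * (1 - A) = 1"
  proof (rule fps_ext, rule fps_ext)
    fix i j
    have "(geoT A * (1 - A)) $ i $ j = ((\<Sum>n\<le>i + j. A ^ n) * (1 - A)) $ i $ j"
      by (rule T_local_left) (rule geo_trunc[OF assms], simp)
    also have "\<dots> = (1 - A ^ Suc (i + j)) $ i $ j" by (simp only: tele_right)
    also have "\<dots> = (1::T) $ i $ j" using tb_pow[OF assms, of "Suc (i + j)"] by (simp add: tb_def)
    finally show "(geoT A * (1 - A)) $ i $ j = (1::T) $ i $ j" .
  qed
qed


unbundle fps_syntax

definition toT :: "ser \<Rightarrow> T" where
  "toT F = Abs_fps (\<lambda>i. Abs_fps (\<lambda>j. Abs_nc (F i j)))"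

lemma toT_nth: "toT F $ i $ j = Abs_nc (F i j)" by (simp add: toT_def)

lemma toT_inj: assumes "toT F = toT G" shows "F = G"
proof -
  have h: "F i j = G i j" for i j
  proof -
    have "Abs_nc (F i j) = Abs_nc (G i j)" using assms by (metis toT_nth)
    then show "F i j = G i j" by (metis Rep_Abs_nc)
  qed
  show ?thesis using h by (intro ext) simp
qed

lemma toT_smul: "toT (smul F G) = toT F * toT G"
proof (rule fps_ext, rule fps_ext)
  fix i j
  show "toT (smul F G) $ i $ j = (toT F * toT G) $ i $ j"
    unfolding T_mult_nth toT_nth
    by (rule Rep_nc_eqI) (simp add: smul_def Rep_nc_sum Rep_nc_mult atLeast0AtMost)
qed
lemma toT_sadd: "toT (sadd F G) = toT F + toT G"
  by (intro fps_ext) (simp add: toT_nth sadd_def Abs_add)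
lemma Abs_sub: "Abs_nc (ncsub f g) = Abs_nc f - Abs_nc g"
  by (rule Rep_nc_eqI) (simp add: Rep_nc_diff ncsub_def)
lemma toT_ssub: "toT (ssub F G) = toT F - toT G"
  by (intro fps_ext) (simp add: toT_nth ssub_def Abs_sub)

lemma toT_sterm00: "toT (sterm 0 0 f) = cT (Abs_nc f)"
  by (intro fps_ext) (simp add: toT_nth sterm_def cT_nth Abs_zero)
lemma toT_sterm10: "toT (sterm 1 0 f) = uT * cT (Abs_nc f)"
  by (intro fps_ext) (simp add: toT_nth sterm_def cT_def uT_def Abs_zero)
lemma toT_sterm01: "toT (sterm 0 1 f) = vT * cT (Abs_nc f)"
  by (intro fps_ext) (simp add: toT_nth sterm_def cT_def vT_def Abs_zero)
lemma toT_sterm11: "toT (sterm 1 1 f) = uT * (vT * cT (Abs_nc f))"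
  by (intro fps_ext) (simp add: toT_nth sterm_def cT_def vT_def uT_def Abs_zero)

lemma toT_spow: "toT (spow F n) = toT F ^ n"
  by (induction n) (simp_all add: toT_sterm00 Abs_one cT_one toT_smul)

lemma toT_pow_nth: "(toT F ^ n) $ i $ j = Abs_nc (spow F n i j)"
  by (simp add: toT_spow[symmetric] toT_nth)

lemma toT_sgeom: "toT (sgeom F) = geoT (toT F)"
proof (intro fps_ext)
  fix i j
  show "toT (sgeom F) $ i $ j = geoT (toT F) $ i $ j"
    unfolding geoT_nth toT_nth
    by (rule Rep_nc_eqI) (simp add: sgeom_def Rep_nc_sum toT_pow_nth)
qed

section \<open>S-conjugation\<close>

definition cmap :: "(ncp \<Rightarrow> ncp) \<Rightarrow> ser \<Rightarrow> ser" where "cmap g F = (\<lambda>i j. g (F i j))"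
definition Dv0 :: "ser \<Rightarrow> ser" where
  "Dv0 F = (\<lambda>i j w. \<Sum>n\<in>{1..j}. smult (1 / of_nat n) (dop n (F i (j - n)) w))"
definition Delta0 :: "ser \<Rightarrow> ser" where
  "Delta0 F = (\<lambda>i j w. \<Sum>k\<le>j. smult (1 / fact k) ((Dv0 ^^ k) F i j w))"

lemma smult_sum_right: "smult q (sum f A) = (\<Sum>x\<in>A. smult q (f x))"
  by (induction A rule: infinite_finite_induct) (simp_all add: smult_add_right)

lemma nclin_sum_smult:
  "nclin F (\<lambda>w. \<Sum>n\<in>A. smult (q n) (g n w)) = (\<lambda>w. \<Sum>n\<in>A. smult (q n) (nclin F (g n) w))"
proof
  fix w0
  show "nclin F (\<lambda>w. \<Sum>n\<in>A. smult (q n) (g n w)) w0 = (\<Sum>n\<in>A. smult (q n) (nclin F (g n) w0))"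
  proof -
    have "nclin F (\<lambda>w. \<Sum>n\<in>A. smult (q n) (g n w)) w0 =
        (\<Sum>v\<in>{v. length v \<le> length w0}. \<Sum>n\<in>A. smult (q n) (g n v * F v w0))"
      unfolding nclin_def by (simp add: sum_distrib_right)
    also have "\<dots> = (\<Sum>n\<in>A. \<Sum>v\<in>{v. length v \<le> length w0}. smult (q n) (g n v * F v w0))"
      by (rule sum.swap)
    also have "\<dots> = (\<Sum>n\<in>A. smult (q n) (nclin F (g n) w0))"
      unfolding nclin_def by (simp add: smult_sum_right)
    finally show ?thesis .
  qed
qed

lemma Sop_inv: "Sop c (Sop (- c) f) = f"
  by (simp add: Sn_eq Sn_inv)
lemma Sop_inv': "Sop (- c) (Sop c f) = f"
  using Sop_inv[of "- c" f] by simp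

lemma Dv_conj: "Dv F = cmap (Sop (- tvar)) (Dv0 (cmap (Sop tvar) F))"
  unfolding Dv_def cmap_def Dv0_def dtop_def Sop_def
  by (simp add: nclin_sum_smult)

lemma cmap_cmap: "cmap f (cmap g F) = cmap (f \<circ> g) F" by (simp add: cmap_def)
lemma cmap_inv: "cmap (Sop tvar) (cmap (Sop (- tvar)) G) = G" by (simp add: cmap_def Sop_inv)
lemma cmap_inv': "cmap (Sop (- tvar)) (cmap (Sop tvar) G) = G" by (simp add: cmap_def Sop_inv')

lemma Dv_pow_conj: "(Dv ^^ k) (cmap (Sop (- tvar)) G) = cmap (Sop (- tvar)) ((Dv0 ^^ k) G)"
  by (induction k) (simp_all add: Dv_conj cmap_inv)

lemma Delta_conj: "Delta (cmap (Sop (- tvar)) G) = cmap (Sop (- tvar)) (Delta0 G)"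
  unfolding Delta_def Delta0_def unfolding Dv_pow_conj unfolding cmap_def Sop_def
  by (simp add: nclin_sum_smult)

lemma Abs_dop: "Abs_nc (dop n f) = dn n (Abs_nc f)"
  by (simp add: dop_def dn_def NL_def dw_def)

lemma Abs_sum_smult: "Abs_nc (\<lambda>w. \<Sum>n\<in>A. smult (q n) (g n w)) = (\<Sum>n\<in>A. rr (q n) * Abs_nc (g n))"
  by (rule Rep_nc_eqI) (simp add: Rep_nc_sum rr_def Rep_sc_mult)

lemma toT_Dv0: "toT (Dv0 F) = Tmap Dd (toT F)"
  by (intro fps_ext) (simp add: toT_nth Dv0_def Dd_def Abs_sum_smult Abs_dop)

lemma toT_Dv0_pow: "toT ((Dv0 ^^ k) F) = Tmap (Dd ^^ k) (toT F)"
proof (induction k)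
  case 0 then show ?case by (intro fps_ext) simp
next
  case (Suc k) then show ?case by (intro fps_ext) (simp add: toT_Dv0)
qed

lemma toT_Delta0: "toT (Delta0 F) = Tmap Dl (toT F)"
proof (intro fps_ext)
  fix i j
  have "toT (Delta0 F) $ i $ j = (\<Sum>k\<le>j. rr (1 / fact k) * Abs_nc ((Dv0 ^^ k) F i j))"
    by (simp add: toT_nth Delta0_def Abs_sum_smult)
  also have "\<dots> = Dl (toT F $ i) $ j"
    by (simp add: Dl_def flip: toT_nth) (simp add: toT_Dv0_pow)
  finally show "toT (Delta0 F) $ i $ j = Tmap Dl (toT F) $ i $ j" by simp
qed

lemma toT_cmap_S:
  assumes "toT F = M * cT yn"
  shows "toT (cmap (Sop c) F) = Tmap (Vmap (sgm c)) M * cT yn"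
proof (intro fps_ext)
  fix i j
  have "toT (cmap (Sop c) F) $ i $ j = Sn c (Abs_nc (F i j))"
    by (simp add: toT_nth cmap_def Sn_eq)
  also have "Abs_nc (F i j) = M $ i $ j * yn"
    using arg_cong[OF assms, of "\<lambda>G. G $ i $ j"] by (simp add: toT_nth cT_def)
  also have "Sn c (M $ i $ j * yn) = sgm c (M $ i $ j) * yn"
    by (simp add: yn_def Sn_mult_letter)
  finally show "toT (cmap (Sop c) F) $ i $ j = (Tmap (Vmap (sgm c)) M * cT yn) $ i $ j"
    by (simp add: cT_def)
qed


unbundle fps_syntax

lemma comm_inv:
  fixes a B C :: "'a::ring_1"
  assumes "a * B = B * a" "C * B = 1" "B * C = 1"
  shows "a * C = C * a"
proof -
  have "a * C = (C * B) * a * C" using assms(2) by simp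
  also have "\<dots> = C * (B * a) * C" by (simp add: mult.assoc)
  also have "\<dots> = C * (a * B) * C" using assms(1) by simp
  also have "\<dots> = C * a * (B * C)" by (simp add: mult.assoc)
  finally show ?thesis using assms(3) by simp
qed

lemma tb_uT: "tb 1 (uT * M)" by (simp add: tb_def uT_def)
lemma tb_vT: "tb 1 (vT * M)" by (simp add: tb_def vT_def)
lemma tb_add: "tb d A \<Longrightarrow> tb d B \<Longrightarrow> tb d (A + B)" by (simp add: tb_def)
lemma tb_diff: "tb d A \<Longrightarrow> tb d B \<Longrightarrow> tb d (A - B)" by (simp add: tb_def)

abbreviation "sig \<equiv> Tmap (Vmap (sgm tvar))"
abbreviation "Dlt \<equiv> Tmap Dl"

lemma hom_sig: "is_hom sig" by (intro is_hom_Tmap is_hom_Vmap is_hom_sgm)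
lemma hom_Dlt: "is_hom Dlt" by (intro is_hom_Tmap is_hom_Dl)

lemma sig_uT: "sig uT = uT" by (intro Tmap_Vmap_uT is_hom_sgm)
lemma sig_vT: "sig vT = vT" by (intro Tmap_Vmap_vT is_hom_sgm)
lemma sig_cT: "sig (cT a) = cT (sgm tvar a)" by (intro Tmap_Vmap_cT is_hom_sgm)

definition PT :: T where "PT = fps_const Ps"
definition ZT :: T where "ZT = fps_const Zs"

lemma Dlt_uT: "Dlt uT = uT" by (rule Tmap_Dl_uT)
lemma Dlt_vT: "Dlt vT = vT" by (rule Tmap_Dl_vT)
lemma Dlt_xT: "Dlt (cT xn) = cT xn * PT"
proof -
  have "Dlt (cT xn) = fps_const (Dl cx)" by (simp add: Tmap_Dl_cT cx_def)
  also have "\<dots> = fps_const (cx * Ps)" using Psi_eq by (simp add: Psi_def)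
  finally show ?thesis by (simp add: cT_def PT_def cx_def)
qed
lemma Dlt_zT: "Dlt (cT zn) = cT zn"
proof -
  have "Dlt (cT zn) = fps_const (Dl cz)" by (simp add: Tmap_Dl_cT cz_def)
  then show ?thesis using Dl_cz by (simp add: cT_def cz_def)
qed
lemma Dlt_yT: "Dlt (cT yn) = cT zn - cT xn * PT"
proof -
  have "Dlt (cT yn) = fps_const (Dl cy)" by (simp add: Tmap_Dl_cT cy_def)
  also have "\<dots> = fps_const (cz - cx * Ps)" using Psi_eq by (simp add: Dl_cy)
  finally show ?thesis by (simp add: cT_def PT_def cx_def cz_def)
qed
lemma Dlt_sc: "Dlt (cT (sc c)) = cT (sc c)"
proof -
  have "Dl (fps_const (sc c)) = fps_const (sc c)" by (rule Dl_fix, rule Dd_const, rule dn_sc)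
  moreover have "Dlt (cT (sc c)) = fps_const (Dl (fps_const (sc c)))" by (rule Tmap_Dl_cT)
  ultimately show ?thesis by (simp add: cT_def)
qed

lemma sgm_A1: "sgm tvar (xn * (sc (1 - tvar) * xn + yn)) = xn * zn"
proof -
  have "sgm tvar (xn * (sc (1 - tvar) * xn + yn)) = xn * (sc (1 - tvar) * xn + (sc tvar * xn + yn))"
    by (simp add: sgm_mult sgm_add sgm_sc sgm_xn sgm_yn)
  also have "sc (1 - tvar) * xn + (sc tvar * xn + yn) = (sc (1 - tvar) + sc tvar) * xn + yn"
    by (simp add: algebra_simps)
  also have "\<dots> = zn" by (simp add: sc_add sc_one zn_def)
  finally show ?thesis .
qed

lemma const_inv: "fps_const (1 - fps_X * fps_const a) = 1 - vT * cT a"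
proof -
  have "fps_const (1 - m) = (1::T) - fps_const m" for m :: V by (rule fps_ext) simp
  moreover have "fps_const (fps_X * fps_const a) = vT * cT a" by (simp add: vT_def cT_def)
  ultimately show ?thesis by simp
qed

lemma toT_sterm10': "toT (sterm (Suc 0) 0 f) = uT * cT (Abs_nc f)" using toT_sterm10 by simp
lemma toT_sterm01': "toT (sterm 0 (Suc 0) f) = vT * cT (Abs_nc f)" using toT_sterm01 by simp
lemma toT_sterm11': "toT (sterm (Suc 0) (Suc 0) f) = uT * (vT * cT (Abs_nc f))" using toT_sterm11 by simp

theorem main_T:
  "Delta0 (cmap (Sop tvar)
     (smul (sgeom (ssub (sadd (sterm 1 0 ncx) (sterm 0 1 ncx))
                        (sterm 1 1 (ncmult ncx (ncadd (ncsmult (1 - tvar) ncx) ncy)))))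
       (smul (sterm 0 0 ncx)
         (smul (sgeom (sterm 0 1 (ncsmult tvar ncx)))
               (sterm 0 0 ncy)))))
   = cmap (Sop tvar) (smul (smul (sterm 0 0 ncx) (sgeom (sterm 1 0 ncx)))
          (smul (sterm 0 0 ncy) (sgeom (sterm 0 1 ncy))))"
  (is "Delta0 (cmap (Sop tvar) ?L) = cmap (Sop tvar) ?R")
proof (rule toT_inj)
  define xT where "xT = cT xn"
  define yT where "yT = cT yn"
  define tT where "tT = cT (sc tvar)"
  define A1 where "A1 = uT * xT + vT * xT - uT * (vT * cT (xn * (sc (1 - tvar) * xn + yn)))"
  define A2 where "A2 = vT * cT (sc tvar * xn)"
  define G1 where "G1 = geoT A1"
  define G2 where "G2 = geoT A2"
  define Ug where "Ug = geoT (uT * xT)"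
  define Pg where "Pg = geoT (vT * yT)"
  have zT: "cT zn = xT + yT" by (simp add: xT_def yT_def zn_def cT_add)
  have tA1: "tb 1 A1" unfolding A1_def by (intro tb_add tb_diff tb_uT tb_vT)
  have tA2: "tb 1 A2" unfolding A2_def by (rule tb_vT)
  have toL: "toT ?L = (G1 * (xT * G2)) * yT"
    by (simp add: toT_smul toT_sgeom toT_ssub toT_sadd toT_sterm10' toT_sterm01' toT_sterm11' toT_sterm00
        Abs_ncx Abs_ncy Abs_mult Abs_add Abs_smult G1_def G2_def A1_def A2_def xT_def yT_def mult.assoc)
  have yP: "yT * Pg = Pg * yT"
  proof (rule comm_inv)
    show "yT * (1 - vT * yT) = (1 - vT * yT) * yT"
      by (simp add: algebra_simps cr(2)[OF central_vT, of yT yT])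
    show "Pg * (1 - vT * yT) = 1" unfolding Pg_def by (rule geoT_inv(2), rule tb_vT)
    show "(1 - vT * yT) * Pg = 1" unfolding Pg_def by (rule geoT_inv(1), rule tb_vT)
  qed
  have toR: "toT ?R = (xT * Ug * Pg) * yT"
    by (simp add: toT_smul toT_sgeom toT_sterm10' toT_sterm01' toT_sterm00 Abs_ncx Abs_ncy
        Ug_def Pg_def xT_def yT_def mult.assoc yP[unfolded Pg_def yT_def])
  note hs = hom_add[OF hom_sig] hom_mult[OF hom_sig] hom_diff[OF hom_sig] hom_one[OF hom_sig]
  note hd = hom_add[OF hom_Dlt] hom_mult[OF hom_Dlt] hom_diff[OF hom_Dlt] hom_one[OF hom_Dlt]
  have sxT: "sig xT = xT" by (simp add: xT_def sig_cT sgm_xn)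
  have syT: "sig yT = tT * xT + yT" by (simp add: yT_def sig_cT sgm_yn cT_add cT_mult tT_def xT_def)
  have sA1: "sig A1 = uT * xT + vT * xT - uT * (vT * (xT * cT zn))"
  proof -
    have "cT (xn * zn) = xT * cT zn" by (simp add: cT_mult xT_def)
    then show ?thesis by (simp add: A1_def hs sig_uT sig_vT sxT sig_cT sgm_A1)
  qed
  have sA2: "sig A2 = vT * (tT * xT)"
    by (simp add: A2_def hs sig_vT sig_cT sgm_sc sgm_sc_mult sgm_xn cT_mult tT_def xT_def)
  have dxT: "Dlt xT = xT * PT" by (simp add: xT_def Dlt_xT)
  have dtT: "Dlt tT = tT" by (simp add: tT_def Dlt_sc)
  have dA1: "Dlt (sig A1) = uT * (xT * PT) + vT * (xT * PT) - uT * (vT * (xT * PT * (xT + yT)))"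
  proof -
    have dzT: "Dlt (cT zn) = xT + yT" using Dlt_zT zT by simp
    show ?thesis by (simp add: sA1 hd Dlt_uT Dlt_vT dxT dzT)
  qed
  have dA2: "Dlt (sig A2) = vT * (tT * (xT * PT))"
    by (simp add: sA2 hd Dlt_vT dxT dtT)
  define I1 where "I1 = Dlt (sig G1)"
  define I2 where "I2 = Dlt (sig G2)"
  define U where "U = sig Ug"
  define Q where "Q = sig Pg"
  have I1: "I1 * (1 - (uT * (xT * PT) + vT * (xT * PT) - uT * (vT * (xT * PT * (xT + yT))))) = 1"
  proof -
    have "G1 * (1 - A1) = 1" unfolding G1_def by (rule geoT_inv(2)[OF tA1])
    then have "Dlt (sig G1) * Dlt (sig (1 - A1)) = 1" by (intro hom_inv[OF hom_Dlt] hom_inv[OF hom_sig])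
    then show ?thesis by (simp add: I1_def hs hd dA1)
  qed
  have I2: "(1 - vT * (tT * (xT * PT))) * I2 = 1"
  proof -
    have "(1 - A2) * G2 = 1" unfolding G2_def by (rule geoT_inv(1)[OF tA2])
    then have "Dlt (sig (1 - A2)) * Dlt (sig G2) = 1" by (intro hom_inv[OF hom_Dlt] hom_inv[OF hom_sig])
    then show ?thesis by (simp add: I2_def hs hd dA2)
  qed
  have U: "(1 - uT * xT) * U = 1"
  proof -
    have "(1 - uT * xT) * Ug = 1" unfolding Ug_def by (rule geoT_inv(1), rule tb_uT)
    then have "sig (1 - uT * xT) * sig Ug = 1" by (rule hom_inv[OF hom_sig])
    then show ?thesis by (simp add: U_def hs sig_uT sxT)
  qed
  have Q1: "Q * (1 - vT * (tT * xT + yT)) = 1"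
  proof -
    have "Pg * (1 - vT * yT) = 1" unfolding Pg_def by (rule geoT_inv(2), rule tb_vT)
    then have "sig Pg * sig (1 - vT * yT) = 1" by (rule hom_inv[OF hom_sig])
    then show ?thesis by (simp add: Q_def hs sig_vT syT)
  qed
  have Q2: "(1 - vT * (tT * xT + yT)) * Q = 1"
  proof -
    have "(1 - vT * yT) * Pg = 1" unfolding Pg_def by (rule geoT_inv(1), rule tb_vT)
    then have "sig (1 - vT * yT) * sig Pg = 1" by (rule hom_inv[OF hom_sig])
    then show ?thesis by (simp add: Q_def hs sig_vT syT)
  qed
  have P1: "PT * (1 - vT * yT) = 1"
  proof -
    have "fps_const (Ps * (1 - fps_X * fps_const yn)) = fps_const 1" unfolding Ps_def by (simp only: Gs_inv_right)
    then show ?thesis by (simp add: PT_def yT_def flip: const_inv)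
  qed
  have P2: "(1 - vT * yT) * PT = 1"
  proof -
    have "fps_const ((1 - fps_X * fps_const yn) * Ps) = fps_const 1" unfolding Ps_def by (simp only: Gs_inv_left)
    then show ?thesis by (simp add: PT_def yT_def flip: const_inv)
  qed
  have Z1: "ZT * (1 - vT * (xT + yT)) = 1"
  proof -
    have "fps_const (Zs * (1 - fps_X * fps_const zn)) = fps_const 1" unfolding Zs_def by (simp only: Gs_inv_right)
    then show ?thesis by (simp add: ZT_def flip: zT const_inv)
  qed
  have Z2: "(1 - vT * (xT + yT)) * ZT = 1"
  proof -
    have "fps_const ((1 - fps_X * fps_const zn) * Zs) = fps_const 1" unfolding Zs_def by (simp only: Gs_inv_left)
    then show ?thesis by (simp add: ZT_def flip: zT const_inv)
  qed
  have cu: "uT * r = r * uT" for r by (rule central_uT) simp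
  have ct: "tT * r = r * tT" for r unfolding tT_def by (rule central_cT, rule central_sc)
  have fin: "I1 * (xT * PT) * I2 * ((xT + yT) - xT * PT) = xT * U * Q * yT"
    by (rule final_alg[OF cu central_vT ct P1 P2 Z1 Z2 I1 I2 U Q1 Q2])
  have "toT (Delta0 (cmap (Sop tvar) ?L)) = Dlt (sig (G1 * (xT * G2)) * yT)"
    by (simp only: toT_Delta0 toT_cmap_S[OF toL[unfolded yT_def]] yT_def)
  also have "\<dots> = I1 * (xT * PT) * I2 * ((xT + yT) - xT * PT)"
  proof -
    have dyT: "Dlt yT = (xT + yT) - xT * PT" using Dlt_yT zT by (simp add: xT_def yT_def)
    show ?thesis by (simp add: hs hd sxT dxT dyT I1_def I2_def mult.assoc)
  qed
  also have "\<dots> = xT * U * Q * yT" by (rule fin)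
  also have "\<dots> = toT (cmap (Sop tvar) ?R)"
    by (simp only: toT_cmap_S[OF toR[unfolded yT_def]]) (simp add: hs sxT U_def Q_def yT_def)
  finally show "toT (Delta0 (cmap (Sop tvar) ?L)) = toT (cmap (Sop tvar) ?R)" .
qed


theorem lemma3p5:
  shows "Delta
     (smul (sgeom (ssub (sadd (sterm 1 0 ncx) (sterm 0 1 ncx))
                        (sterm 1 1 (ncmult ncx (ncadd (ncsmult (1 - tvar) ncx) ncy)))))
       (smul (sterm 0 0 ncx)
         (smul (sgeom (sterm 0 1 (ncsmult tvar ncx)))
               (sterm 0 0 ncy))))
   = smul (smul (sterm 0 0 ncx) (sgeom (sterm 1 0 ncx)))
          (smul (sterm 0 0 ncy) (sgeom (sterm 0 1 ncy)))"
proof -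
  have "Delta (smul (sgeom (ssub (sadd (sterm 1 0 ncx) (sterm 0 1 ncx))
                        (sterm 1 1 (ncmult ncx (ncadd (ncsmult (1 - tvar) ncx) ncy)))))
       (smul (sterm 0 0 ncx)
         (smul (sgeom (sterm 0 1 (ncsmult tvar ncx)))
               (sterm 0 0 ncy))))
     = Delta (cmap (Sop (- tvar)) (cmap (Sop tvar) (smul (sgeom (ssub (sadd (sterm 1 0 ncx) (sterm 0 1 ncx))
                        (sterm 1 1 (ncmult ncx (ncadd (ncsmult (1 - tvar) ncx) ncy)))))
       (smul (sterm 0 0 ncx)
         (smul (sgeom (sterm 0 1 (ncsmult tvar ncx)))
               (sterm 0 0 ncy))))))"
    by (simp only: cmap_inv')
  also have "\<dots> = cmap (Sop (- tvar)) (Delta0 (cmap (Sop tvar) (smul (sgeom (ssub (sadd (sterm 1 0 ncx) (sterm 0 1 ncx))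
                        (sterm 1 1 (ncmult ncx (ncadd (ncsmult (1 - tvar) ncx) ncy)))))
       (smul (sterm 0 0 ncx)
         (smul (sgeom (sterm 0 1 (ncsmult tvar ncx)))
               (sterm 0 0 ncy))))))"
    by (rule Delta_conj)
  also have "\<dots> = cmap (Sop (- tvar)) (cmap (Sop tvar) (smul (smul (sterm 0 0 ncx) (sgeom (sterm 1 0 ncx)))
          (smul (sterm 0 0 ncy) (sgeom (sterm 0 1 ncy)))))"
    by (simp only: main_T)
  also have "\<dots> = smul (smul (sterm 0 0 ncx) (sgeom (sterm 1 0 ncx)))
          (smul (sterm 0 0 ncy) (sgeom (sterm 0 1 ncy)))"
    by (rule cmap_inv')
  finally show ?thesis .
qed

end
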